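(* Let $X,Y$ be $\mathfrak{Q}$-preordered $\mathfrak{Q}$-subsets. (1) Every $\mathfrak{Q}$-polarity from $X$ to $Y$ (i.e. $\mathfrak{Q}$-Galois connection $f\dashv g$ with $f\colon\mathsf{P}X\to\mathsf{P}^{\dagger}Y$, $g\colon\mathsf{P}^{\dagger}Y\to\mathsf{P}X$) is of the form $\phi_{\uparrow}\dashv\phi^{\downarrow}$ for some $\mathfrak{Q}$-distributor $\phi$ from $X$ to $Y$. (2) Every $\mathfrak{Q}$-axiality from $X$ to $Y$ (i.e. $\mathfrak{Q}$-Galois connection $f\dashv g$ with $f\colon\mathsf{P}X\to\mathsf{P}Y$, $g\colon\mathsf{P}Y\to\mathsf{P}X$) is of the form $\phi^{*}\dashv\phi_{*}$ for some $\mathfrak{Q}$-distributor $\phi$ from $Y$ to $X$. (3) Every dual $\mathfrak{Q}$-axiality from $X$ to $Y$ (i.e. $\mathfrak{Q}$-Galois connection $f\dashv g$ with $f\colon\mathsf{P}^{\dagger}X\to\mathsf{P}^{\dagger}Y$, $g\colon\mathsf{P}^{\dagger}Y\to\mathsf{P}^{\dagger}X$) is of the form $\phi_{\dagger}\dashv\phi^{\dagger}$ for some $\mathfrak{Q}$-distributor $\phi$ from $Y$ to $X$.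
   Context: $(\mathfrak{Q},\&,e)$ is a non-trivial unital quantale (complete lattice with associative multiplication with unit $e$ preserving joins in each variable, $\bot<e$), implications $p\& q\le r\iff p\le r/ q\iff q\le p\backslash r$, $\mathcal{D}\mathfrak{Q}(p,q)=\{u\mid (u/ p)\& p=u=q\&(q\backslash u)\}$. A $\mathfrak{Q}$-subset is a set $X$ with $|\cdot|\colon X\to\mathfrak{Q}$; $\mathbf{1}_q$ is $\{*\}$ with $|*|=q$. A $\mathfrak{Q}$-relation from $X$ to $Y$ is a map $\phi\colon X\times Y\to\mathfrak{Q}$ with $\phi(x,y)\in\mathcal{D}\mathfrak{Q}(|x|,|y|)$, ordered pointwise; composition $(\psi\circ\phi)(x,z)=\bigvee_y(\psi(y,z)/|y|)\&\phi(x,y)$; $\xi\swarrow\phi$ is the largest $\psi'$ with $\psi'\circ\phi\le\xi$ and $\psi\searrow\xi$ the largest $\phi'$ with $\psi\circ\phi'\le\xi$. A $\mathfrak{Q}$-preordered $\mathfrak{Q}$-subset is a $\mathfrak{Q}$-subset $X$ with a $\mathfrak{Q}$-relation $1_X^{\natural}$ on $X$ with $\mathrm{id}_X\le 1_X^{\natural}$ ($\mathrm{id}_X(x,x)=|x|$, else $\bot$) and $1_X^{\natural}\circ 1_X^{\natural}\le 1_X^{\natural}$. A $\mathfrak{Q}$-order-preserving map $h\colon A\to B$ satisfies $|ha|=|a|$ and $1_A^{\natural}(a,a')\le 1_B^{\natural}(ha,ha')$; $h\le k$ means $|a|\le 1_B^{\natural}(ha,ka)$ for all $a$; a $\mathfrak{Q}$-Galois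 connection $h\dashv k$ ($h\colon A\to B$, $k\colon B\to A$ $\mathfrak{Q}$-order-preserving) means $1_A\le kh$ and $hk\le 1_B$. A $\mathfrak{Q}$-distributor from $X$ to $Y$ is a $\mathfrak{Q}$-relation $\phi$ with $1_Y^{\natural}\circ\phi\circ 1_X^{\natural}\le\phi$. $\mathsf{P}X$ consists of $\mathfrak{Q}$-relations $\mu$ from $X$ to some $\mathbf{1}_q$ with $\mu\circ 1_X^{\natural}\le\mu$, $|\mu|=q$, $\mathfrak{Q}$-preorder $1_{\mathsf{P}X}^{\natural}(\mu,\mu')=\mu'\swarrow\mu$; $\mathsf{P}^{\dagger}X$ consists of $\mathfrak{Q}$-relations $\lambda$ from some $\mathbf{1}_q$ to $X$ with $1_X^{\natural}\circ\lambda\le\lambda$, $|\lambda|=q$, $1_{\mathsf{P}^{\dagger}X}^{\natural}(\lambda,\lambda')=\lambda'\searrow\lambda$. For a $\mathfrak{Q}$-distributor $\phi$ from $A$ to $B$: $\phi_{\uparrow}\mu=\phi\swarrow\mu$ ($\mathsf{P}A\to\mathsf{P}^{\dagger}B$), $\phi^{\downarrow}\lambda'=\lambda'\searrow\phi$ ($\mathsf{P}^{\dagger}B\to\mathsf{P}A$), $\phi^{*}\mu'=\mu'\circ\phi$ ($\mathsf{P}B\to\mathsf{P}A$), $\phi_{*}\mu=\mu\swarrow\phi$ ($\mathsf{P}A\to\mathsf{P}B$), $\phi_{\dagger}\lambda'=\phi\searrow\lambda'$ ($\mathsf{P}^{\dagger}B\to\mathsf{P}^{\dagger}A$), $\phi^{\dagger}\lambda=\phi\circ\lambda$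 ($\mathsf{P}^{\dagger}A\to\mathsf{P}^{\dagger}B$). *)

theory Defs
  imports Main
begin

text \<open>A unital quantale: complete lattice with an associative multiplication
  (written *, the paper's &) with unit 1 (the paper's e), preserving arbitrary
  joins in each variable.\<close>

class unital_quantale = complete_lattice + monoid_mult +
  assumes quantale_Sup_distl: "x * Sup A = (SUP a\<in>A. x * a)"
  and quantale_Sup_distr: "Sup A * x = (SUP a\<in>A. a * x)"

text \<open>Implications: p * q \<le> r iff p \<le> r / q iff q \<le> p \ r.\<close>

definition rres :: "'q::unital_quantale \<Rightarrow> 'q \<Rightarrow> 'q" where
  "rres r q = Sup {p. p * q \<le> r}"

definition lres :: "'q::unital_quantale \<Rightarrow> 'q \<Rightarrow> 'q" where
  "lres p r = Sup {q. p * q \<le> r}"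

definition DQ :: "'q::unital_quantale \<Rightarrow> 'q \<Rightarrow> 'q set" where
  "DQ p q = {u. rres u p * p = u \<and> u = q * lres q u}"

record ('a, 'q) qsub =
  carr :: "'a set"
  nrm :: "'a \<Rightarrow> 'q"

record ('a, 'q) qpre = "('a, 'q) qsub" +
  prel :: "'a \<Rightarrow> 'a \<Rightarrow> 'q"

definition qone :: "'q \<Rightarrow> (unit, 'q) qsub" where
  "qone q = \<lparr>carr = {()}, nrm = (\<lambda>_. q)\<rparr>"

text \<open>Q-relations from X to Y, represented as functions that are \<open>bot\<close>
  outside the carriers (canonical representatives).\<close>

definition is_qrel :: "('a, 'q::unital_quantale, 'x) qsub_scheme \<Rightarrow> ('b, 'q, 'y) qsub_scheme
    \<Rightarrow> ('a \<Rightarrow> 'b \<Rightarrow> 'q) \<Rightarrow> bool" where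
  "is_qrel X Y \<phi> \<longleftrightarrow>
     (\<forall>x\<in>carr X. \<forall>y\<in>carr Y. \<phi> x y \<in> DQ (nrm X x) (nrm Y y)) \<and>
     (\<forall>x y. x \<notin> carr X \<or> y \<notin> carr Y \<longrightarrow> \<phi> x y = bot)"

definition qrel_le :: "('a, 'q::unital_quantale, 'x) qsub_scheme \<Rightarrow> ('b, 'q, 'y) qsub_scheme
    \<Rightarrow> ('a \<Rightarrow> 'b \<Rightarrow> 'q) \<Rightarrow> ('a \<Rightarrow> 'b \<Rightarrow> 'q) \<Rightarrow> bool" where
  "qrel_le X Y \<phi> \<psi> \<longleftrightarrow> (\<forall>x\<in>carr X. \<forall>y\<in>carr Y. \<phi> x y \<le> \<psi> x y)"

definition qid :: "('a, 'q::unital_quantale, 'x) qsub_scheme \<Rightarrow> 'a \<Rightarrow> 'a \<Rightarrow> 'q" where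
  "qid X x x' = (if x \<in> carr X \<and> x = x' then nrm X x else bot)"

definition qcomp :: "('a, 'q::unital_quantale, 'x) qsub_scheme \<Rightarrow> ('b, 'q, 'y) qsub_scheme
    \<Rightarrow> ('c, 'q, 'z) qsub_scheme \<Rightarrow> ('b \<Rightarrow> 'c \<Rightarrow> 'q) \<Rightarrow> ('a \<Rightarrow> 'b \<Rightarrow> 'q) \<Rightarrow> 'a \<Rightarrow> 'c \<Rightarrow> 'q" where
  "qcomp X Y Z \<psi> \<phi> x z =
     (if x \<in> carr X \<and> z \<in> carr Z
      then Sup {rres (\<psi> y z) (nrm Y y) * \<phi> x y | y. y \<in> carr Y}
      else bot)"

definition qlift :: "('a, 'q::unital_quantale, 'x) qsub_scheme \<Rightarrow> ('b, 'q, 'y) qsub_scheme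
    \<Rightarrow> ('c, 'q, 'z) qsub_scheme \<Rightarrow> ('a \<Rightarrow> 'c \<Rightarrow> 'q) \<Rightarrow> ('a \<Rightarrow> 'b \<Rightarrow> 'q) \<Rightarrow> 'b \<Rightarrow> 'c \<Rightarrow> 'q" where
  "qlift X Y Z \<xi> \<phi> = (THE \<psi>. is_qrel Y Z \<psi> \<and> qrel_le X Z (qcomp X Y Z \<psi> \<phi>) \<xi> \<and>
      (\<forall>\<psi>'. is_qrel Y Z \<psi>' \<and> qrel_le X Z (qcomp X Y Z \<psi>' \<phi>) \<xi> \<longrightarrow> qrel_le Y Z \<psi>' \<psi>))"

definition qext :: "('a, 'q::unital_quantale, 'x) qsub_scheme \<Rightarrow> ('b, 'q, 'y) qsub_scheme
    \<Rightarrow> ('c, 'q, 'z) qsub_scheme \<Rightarrow> ('b \<Rightarrow> 'c \<Rightarrow> 'q) \<Rightarrow> ('a \<Rightarrow> 'c \<Rightarrow> 'q) \<Rightarrow> 'a \<Rightarrow> 'b \<Rightarrow> 'q" where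
  "qext X Y Z \<psi> \<xi> = (THE \<phi>. is_qrel X Y \<phi> \<and> qrel_le X Z (qcomp X Y Z \<psi> \<phi>) \<xi> \<and>
      (\<forall>\<phi>'. is_qrel X Y \<phi>' \<and> qrel_le X Z (qcomp X Y Z \<psi> \<phi>') \<xi> \<longrightarrow> qrel_le X Y \<phi>' \<phi>))"

definition is_qpre :: "('a, 'q::unital_quantale, 'x) qpre_scheme \<Rightarrow> bool" where
  "is_qpre X \<longleftrightarrow> is_qrel X X (prel X) \<and> qrel_le X X (qid X) (prel X) \<and>
     qrel_le X X (qcomp X X X (prel X) (prel X)) (prel X)"

definition is_qdist :: "('a, 'q::unital_quantale, 'x) qpre_scheme \<Rightarrow> ('b, 'q, 'y) qpre_scheme
    \<Rightarrow> ('a \<Rightarrow> 'b \<Rightarrow> 'q) \<Rightarrow> bool" where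
  "is_qdist X Y \<phi> \<longleftrightarrow> is_qrel X Y \<phi> \<and>
     qrel_le X Y (qcomp X Y Y (prel Y) (qcomp X X Y \<phi> (prel X))) \<phi>"

definition PX :: "('a, 'q::unital_quantale, 'x) qpre_scheme \<Rightarrow> ('q \<times> ('a \<Rightarrow> unit \<Rightarrow> 'q), 'q) qpre" where
  "PX X = (let C = {(q, \<mu>). is_qrel X (qone q) \<mu> \<and>
                   qrel_le X (qone q) (qcomp X X (qone q) \<mu> (prel X)) \<mu>}
    in \<lparr>carr = C, nrm = fst,
        prel = (\<lambda>(q, \<mu>) (q', \<mu>'). if (q, \<mu>) \<in> C \<and> (q', \<mu>') \<in> C
                  then qlift X (qone q) (qone q') \<mu>' \<mu> () () else bot)\<rparr>)"

definition PdX :: "('a, 'q::unital_quantale, 'x) qpre_scheme \<Rightarrow> ('q \<times> (unit \<Rightarrow> 'a \<Rightarrow> 'q), 'q) qpre" where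
  "PdX X = (let C = {(q, l). is_qrel (qone q) X l \<and>
                   qrel_le (qone q) X (qcomp (qone q) X X (prel X) l) l}
    in \<lparr>carr = C, nrm = fst,
        prel = (\<lambda>(q, l) (q', l'). if (q, l) \<in> C \<and> (q', l') \<in> C
                  then qext (qone q) (qone q') X l' l () () else bot)\<rparr>)"

definition is_qmono :: "('a, 'q::unital_quantale, 'x) qpre_scheme \<Rightarrow> ('b, 'q, 'y) qpre_scheme
    \<Rightarrow> ('a \<Rightarrow> 'b) \<Rightarrow> bool" where
  "is_qmono A B h \<longleftrightarrow> (\<forall>a\<in>carr A. h a \<in> carr B \<and> nrm B (h a) = nrm A a) \<and>
     (\<forall>a\<in>carr A. \<forall>a'\<in>carr A. prel A a a' \<le> prel B (h a) (h a'))"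

definition qmap_le :: "('a, 'q::unital_quantale, 'x) qpre_scheme \<Rightarrow> ('b, 'q, 'y) qpre_scheme
    \<Rightarrow> ('a \<Rightarrow> 'b) \<Rightarrow> ('a \<Rightarrow> 'b) \<Rightarrow> bool" where
  "qmap_le A B h k \<longleftrightarrow> (\<forall>a\<in>carr A. nrm A a \<le> prel B (h a) (k a))"

definition qgalois :: "('a, 'q::unital_quantale, 'x) qpre_scheme \<Rightarrow> ('b, 'q, 'y) qpre_scheme
    \<Rightarrow> ('a \<Rightarrow> 'b) \<Rightarrow> ('b \<Rightarrow> 'a) \<Rightarrow> bool" where
  "qgalois A B h k \<longleftrightarrow> is_qmono A B h \<and> is_qmono B A k \<and>
     qmap_le A A id (k \<circ> h) \<and> qmap_le B B (h \<circ> k) id"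

definition d_up :: "('a, 'q::unital_quantale, 'x) qpre_scheme \<Rightarrow> ('b, 'q, 'y) qpre_scheme
    \<Rightarrow> ('a \<Rightarrow> 'b \<Rightarrow> 'q) \<Rightarrow> 'q \<times> ('a \<Rightarrow> unit \<Rightarrow> 'q) \<Rightarrow> 'q \<times> (unit \<Rightarrow> 'b \<Rightarrow> 'q)" where
  "d_up A B \<phi> = (\<lambda>(q, \<mu>). (q, qlift A (qone q) B \<phi> \<mu>))"

definition d_down :: "('a, 'q::unital_quantale, 'x) qpre_scheme \<Rightarrow> ('b, 'q, 'y) qpre_scheme
    \<Rightarrow> ('a \<Rightarrow> 'b \<Rightarrow> 'q) \<Rightarrow> 'q \<times> (unit \<Rightarrow> 'b \<Rightarrow> 'q) \<Rightarrow> 'q \<times> ('a \<Rightarrow> unit \<Rightarrow> 'q)" where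
  "d_down A B \<phi> = (\<lambda>(q, l). (q, qext A (qone q) B l \<phi>))"

definition d_star_up :: "('a, 'q::unital_quantale, 'x) qpre_scheme \<Rightarrow> ('b, 'q, 'y) qpre_scheme
    \<Rightarrow> ('a \<Rightarrow> 'b \<Rightarrow> 'q) \<Rightarrow> 'q \<times> ('b \<Rightarrow> unit \<Rightarrow> 'q) \<Rightarrow> 'q \<times> ('a \<Rightarrow> unit \<Rightarrow> 'q)" where
  "d_star_up A B \<phi> = (\<lambda>(q, \<mu>). (q, qcomp A B (qone q) \<mu> \<phi>))"

definition d_star_low :: "('a, 'q::unital_quantale, 'x) qpre_scheme \<Rightarrow> ('b, 'q, 'y) qpre_scheme
    \<Rightarrow> ('a \<Rightarrow> 'b \<Rightarrow> 'q) \<Rightarrow> 'q \<times> ('a \<Rightarrow> unit \<Rightarrow> 'q) \<Rightarrow> 'q \<times> ('b \<Rightarrow> unit \<Rightarrow> 'q)" where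
  "d_star_low A B \<phi> = (\<lambda>(q, \<mu>). (q, qlift A B (qone q) \<mu> \<phi>))"

definition d_dag_low :: "('a, 'q::unital_quantale, 'x) qpre_scheme \<Rightarrow> ('b, 'q, 'y) qpre_scheme
    \<Rightarrow> ('a \<Rightarrow> 'b \<Rightarrow> 'q) \<Rightarrow> 'q \<times> (unit \<Rightarrow> 'b \<Rightarrow> 'q) \<Rightarrow> 'q \<times> (unit \<Rightarrow> 'a \<Rightarrow> 'q)" where
  "d_dag_low A B \<phi> = (\<lambda>(q, l). (q, qext (qone q) A B \<phi> l))"

definition d_dag_up :: "('a, 'q::unital_quantale, 'x) qpre_scheme \<Rightarrow> ('b, 'q, 'y) qpre_scheme
    \<Rightarrow> ('a \<Rightarrow> 'b \<Rightarrow> 'q) \<Rightarrow> 'q \<times> (unit \<Rightarrow> 'a \<Rightarrow> 'q) \<Rightarrow> 'q \<times> (unit \<Rightarrow> 'b \<Rightarrow> 'q)" where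
  "d_dag_up A B \<phi> = (\<lambda>(q, l). (q, qcomp (qone q) A B \<phi> l))"

end

theory Submission
  imports Defs
begin


lemma SUP_mult_distr: "(SUP i\<in>I. f i) * (c::'q::unital_quantale) = (SUP i\<in>I. f i * c)"
  by (simp add: quantale_Sup_distr image_image)

lemma mult_SUP_distr: "(c::'q::unital_quantale) * (SUP i\<in>I. f i) = (SUP i\<in>I. c * f i)"
  by (simp add: quantale_Sup_distl image_image)

lemma qmult_mono_r: "b \<le> c \<Longrightarrow> (a::'q::unital_quantale) * b \<le> a * c"
proof -
  assume "b \<le> c"
  hence "Sup {b, c} = c" by (simp add: sup_absorb2)
  moreover have "a * Sup {b,c} = sup (a*b) (a*c)" using quantale_Sup_distl[of a "{b,c}"] by simp
  ultimately have e: "sup (a*b) (a*c) = a * c" by simp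
  show ?thesis using sup.cobounded1[of "a*b" "a*c"] unfolding e .
qed

lemma qmult_mono_l: "b \<le> c \<Longrightarrow> b * (a::'q::unital_quantale) \<le> c * a"
proof -
  assume "b \<le> c"
  hence "Sup {b, c} = c" by (simp add: sup_absorb2)
  moreover have "Sup {b,c} * a = sup (b*a) (c*a)" using quantale_Sup_distr[of "{b,c}" a] by simp
  ultimately have e: "sup (b*a) (c*a) = c * a" by simp
  show ?thesis using sup.cobounded1[of "b*a" "c*a"] unfolding e .
qed

lemma qmult_mono: "a \<le> b \<Longrightarrow> c \<le> d \<Longrightarrow> a * c \<le> (b::'q::unital_quantale) * d"
proof -
  assume ab: "a \<le> b" and cd: "c \<le> d"
  have "a * c \<le> b * c" using ab by (rule qmult_mono_l)
  moreover have "b * c \<le> b * d" using cd by (rule qmult_mono_r)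
  ultimately show ?thesis by (rule order_trans)
qed

lemma qmult_bot_r [simp]: "(a::'q::unital_quantale) * bot = bot"
  using quantale_Sup_distl[of a "{}"] by simp

lemma qmult_bot_l [simp]: "bot * (a::'q::unital_quantale) = bot"
  using quantale_Sup_distr[of "{}" a] by simp

lemma rres_mult: "rres r q * q \<le> (r::'q::unital_quantale)"
  unfolding rres_def by (simp add: quantale_Sup_distr SUP_le_iff)

lemma lres_mult: "p * lres p r \<le> (r::'q::unital_quantale)"
  unfolding lres_def by (simp add: quantale_Sup_distl SUP_le_iff)

lemma rres_galois: "p * q \<le> r \<longleftrightarrow> p \<le> rres (r::'q::unital_quantale) q"
proof
  assume "p * q \<le> r" thus "p \<le> rres r q" unfolding rres_def by (simp add: Sup_upper)
next
  assume "p \<le> rres r q"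
  hence "p * q \<le> rres r q * q" by (rule qmult_mono_l)
  thus "p * q \<le> r" using rres_mult[of r q] by (rule order_trans)
qed

lemma lres_galois: "p * q \<le> r \<longleftrightarrow> q \<le> lres p (r::'q::unital_quantale)"
proof
  assume "p * q \<le> r" thus "q \<le> lres p r" unfolding lres_def by (simp add: Sup_upper)
next
  assume "q \<le> lres p r"
  hence "p * q \<le> p * lres p r" by (rule qmult_mono_r)
  thus "p * q \<le> r" using lres_mult[of p r] by (rule order_trans)
qed

lemma rres_mono: "a \<le> b \<Longrightarrow> rres a q \<le> rres (b::'q::unital_quantale) q"
proof -
  assume ab: "a \<le> b"
  have "rres a q * q \<le> b" using rres_mult[of a q] ab by (rule order_trans)
  thus ?thesis by (simp add: rres_galois)
qed

lemma lres_mono: "a \<le> b \<Longrightarrow> lres q a \<le> lres q (b::'q::unital_quantale)"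
proof -
  assume ab: "a \<le> b"
  have "q * lres q a \<le> b" using lres_mult[of q a] ab by (rule order_trans)
  thus ?thesis by (simp add: lres_galois)
qed

lemma DQ_iff: "u \<in> DQ p q \<longleftrightarrow> (\<exists>a. u = a * p) \<and> (\<exists>b. u = q * (b::'q::unital_quantale))"
proof
  assume "u \<in> DQ p q"
  hence "u = rres u p * p" "u = q * lres q u" unfolding DQ_def by auto
  thus "(\<exists>a. u = a * p) \<and> (\<exists>b. u = q * b)" by blast
next
  assume "(\<exists>a. u = a * p) \<and> (\<exists>b. u = q * b)"
  then obtain a b where a: "u = a * p" and b: "u = q * b" by blast
  have "a \<le> rres u p" using a rres_galois by fastforce
  hence "a * p \<le> rres u p * p" by (rule qmult_mono_l)
  hence "u \<le> rres u p * p" using a by simp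
  hence 1: "rres u p * p = u" using rres_mult[of u p] by (rule antisym[rotated])
  have "b \<le> lres q u" using b lres_galois by fastforce
  hence "q * b \<le> q * lres q u" by (rule qmult_mono_r)
  hence "u \<le> q * lres q u" using b by simp
  hence 2: "q * lres q u = u" using lres_mult[of q u] by (rule antisym[rotated])
  show "u \<in> DQ p q" using 1 2 unfolding DQ_def by simp
qed

lemma DQ_rres: "u \<in> DQ p q \<Longrightarrow> rres u p * p = u"
  unfolding DQ_def by simp

lemma DQ_lres: "u \<in> DQ p q \<Longrightarrow> q * lres q u = (u::'q::unital_quantale)"
  unfolding DQ_def by simp

lemma DQ_bot [simp]: "(bot::'q::unital_quantale) \<in> DQ p q"
  unfolding DQ_iff
proof
  show "\<exists>a. bot = a * p" by (rule exI[of _ bot]) simp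
  show "\<exists>b. bot = q * b" by (rule exI[of _ bot]) simp
qed

lemma DQ_refl [simp]: "(p::'q::unital_quantale) \<in> DQ p p"
  unfolding DQ_iff
proof
  show "\<exists>a. p = a * p" by (rule exI[of _ 1]) simp
  show "\<exists>b. p = p * b" by (rule exI[of _ 1]) simp
qed

lemma DQ_Sup: "A \<subseteq> DQ p q \<Longrightarrow> Sup A \<in> DQ p (q::'q::unital_quantale)"
proof -
  assume A: "A \<subseteq> DQ p q"
  have "(SUP a\<in>A. rres a p * p) = (SUP a\<in>A. a)"
    by (rule SUP_cong) (use A in \<open>auto simp: DQ_rres\<close>)
  hence "Sup A = (SUP a\<in>A. rres a p) * p"
    by (simp add: SUP_mult_distr)
  moreover have "(SUP a\<in>A. q * lres q a) = (SUP a\<in>A. a)"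
    by (rule SUP_cong) (use A in \<open>auto simp: DQ_lres\<close>)
  hence "Sup A = q * (SUP a\<in>A. lres q a)"
    by (simp add: mult_SUP_distr)
  ultimately show ?thesis unfolding DQ_iff by blast
qed

lemma DQ_SUP: "(\<And>i. i \<in> I \<Longrightarrow> f i \<in> DQ p q) \<Longrightarrow> (SUP i\<in>I. f i) \<in> DQ p (q::'q::unital_quantale)"
  by (rule DQ_Sup) blast

lemma DQ_comp_eq: "u \<in> DQ p q \<Longrightarrow> v \<in> DQ q r \<Longrightarrow> rres v q * u = v * lres q (u::'q::unital_quantale)"
proof -
  assume u: "u \<in> DQ p q" and v: "v \<in> DQ q r"
  have "rres v q * u = rres v q * (q * lres q u)" using DQ_lres[OF u] by simp
  also have "\<dots> = (rres v q * q) * lres q u" by (simp add: mult.assoc)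
  also have "\<dots> = v * lres q u" using DQ_rres[OF v] by simp
  finally show ?thesis .
qed

lemma DQ_comp: "u \<in> DQ p q \<Longrightarrow> v \<in> DQ q r \<Longrightarrow> rres v q * u \<in> DQ p (r::'q::unital_quantale)"
proof -
  assume u: "u \<in> DQ p q" and v: "v \<in> DQ q r"
  have "rres v q * u = rres v q * (rres u p * p)" using DQ_rres[OF u] by simp
  hence 1: "rres v q * u = (rres v q * rres u p) * p" by (simp add: mult.assoc)
  have "rres v q * u = (r * lres r v) * lres q u" using DQ_comp_eq[OF u v] DQ_lres[OF v] by simp
  hence 2: "rres v q * u = r * (lres r v * lres q u)" by (simp add: mult.assoc)
  show ?thesis unfolding DQ_iff using 1 2 by blast
qed

lemma DQ_unit_l: "u \<in> DQ p q \<Longrightarrow> rres q q * u = (u::'q::unital_quantale)"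
  using DQ_comp_eq[of u p q q q] DQ_lres[of u p q] by simp




lemma qcomp_in: "x \<in> carr X \<Longrightarrow> z \<in> carr Z \<Longrightarrow>
  qcomp X Y Z \<psi> \<phi> x z = (SUP y\<in>carr Y. rres (\<psi> y z) (nrm Y y) * \<phi> x y)"
  unfolding qcomp_def by (simp add: Setcompr_eq_image)

lemma qcomp_out: "\<not> (x \<in> carr X \<and> z \<in> carr Z) \<Longrightarrow> qcomp X Y Z \<psi> \<phi> x z = bot"
  unfolding qcomp_def by auto

lemma qrel_DQ: "is_qrel X Y \<phi> \<Longrightarrow> x \<in> carr X \<Longrightarrow> y \<in> carr Y \<Longrightarrow> \<phi> x y \<in> DQ (nrm X x) (nrm Y y)"
  unfolding is_qrel_def by blast

lemma qrel_out: "is_qrel X Y \<phi> \<Longrightarrow> \<not> (x \<in> carr X \<and> y \<in> carr Y) \<Longrightarrow> \<phi> x y = bot"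
  unfolding is_qrel_def by blast

lemma qrel_leD: "qrel_le X Y \<phi> \<psi> \<Longrightarrow> x \<in> carr X \<Longrightarrow> y \<in> carr Y \<Longrightarrow> \<phi> x y \<le> \<psi> x y"
  unfolding qrel_le_def by blast

lemma qrel_eqI: "is_qrel X Y a \<Longrightarrow> is_qrel X Y b \<Longrightarrow> qrel_le X Y a b \<Longrightarrow> qrel_le X Y b a \<Longrightarrow> a = b"
  apply (rule ext, rule ext)
  subgoal for x y
    by (cases "x \<in> carr X \<and> y \<in> carr Y") (auto simp: qrel_out intro: antisym dest: qrel_leD)
  done

lemma qcomp_alt: "is_qrel X Y \<phi> \<Longrightarrow> is_qrel Y Z \<psi> \<Longrightarrow> x \<in> carr X \<Longrightarrow> z \<in> carr Z \<Longrightarrow>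
  qcomp X Y Z \<psi> \<phi> x z = (SUP y\<in>carr Y. \<psi> y z * lres (nrm Y y) (\<phi> x y))"
  unfolding qcomp_in by (rule SUP_cong) (auto intro: DQ_comp_eq qrel_DQ)

lemma qcomp_qrel: "is_qrel X Y \<phi> \<Longrightarrow> is_qrel Y Z \<psi> \<Longrightarrow> is_qrel X Z (qcomp X Y Z \<psi> \<phi>)"
  unfolding is_qrel_def[of X Z]
  by (auto simp: qcomp_in qcomp_out intro!: DQ_SUP DQ_comp qrel_DQ)

lemma qcomp_mono1: "qrel_le Y Z \<psi> \<psi>' \<Longrightarrow> qrel_le X Z (qcomp X Y Z \<psi> \<phi>) (qcomp X Y Z \<psi>' \<phi>)"
  unfolding qrel_le_def[of X Z]
proof (intro ballI)
  fix x z assume a: "qrel_le Y Z \<psi> \<psi>'" and x: "x \<in> carr X" and z: "z \<in> carr Z"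
  show "qcomp X Y Z \<psi> \<phi> x z \<le> qcomp X Y Z \<psi>' \<phi> x z"
    unfolding qcomp_in[OF x z]
  proof (rule SUP_mono)
    fix y assume y: "y \<in> carr Y"
    have "rres (\<psi> y z) (nrm Y y) * \<phi> x y \<le> rres (\<psi>' y z) (nrm Y y) * \<phi> x y"
      by (rule qmult_mono_l, rule rres_mono, rule qrel_leD[OF a y z])
    thus "\<exists>m\<in>carr Y. rres (\<psi> y z) (nrm Y y) * \<phi> x y \<le> rres (\<psi>' m z) (nrm Y m) * \<phi> x m"
      using y by blast
  qed
qed

lemma qcomp_mono2: "qrel_le X Y \<phi> \<phi>' \<Longrightarrow> qrel_le X Z (qcomp X Y Z \<psi> \<phi>) (qcomp X Y Z \<psi> \<phi>')"
  unfolding qrel_le_def[of X Z]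
proof (intro ballI)
  fix x z assume a: "qrel_le X Y \<phi> \<phi>'" and x: "x \<in> carr X" and z: "z \<in> carr Z"
  show "qcomp X Y Z \<psi> \<phi> x z \<le> qcomp X Y Z \<psi> \<phi>' x z"
    unfolding qcomp_in[OF x z]
  proof (rule SUP_mono)
    fix y assume y: "y \<in> carr Y"
    have "rres (\<psi> y z) (nrm Y y) * \<phi> x y \<le> rres (\<psi> y z) (nrm Y y) * \<phi>' x y"
      by (rule qmult_mono_r, rule qrel_leD[OF a x y])
    thus "\<exists>m\<in>carr Y. rres (\<psi> y z) (nrm Y y) * \<phi> x y \<le> rres (\<psi> m z) (nrm Y m) * \<phi>' x m"
      using y by blast
  qed
qed

lemma qrel_le_trans: "qrel_le X Y a b \<Longrightarrow> qrel_le X Y b c \<Longrightarrow> qrel_le X Y a c"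
  unfolding qrel_le_def by (meson order_trans)

lemma qcomp_assoc:
  assumes p: "is_qrel X Y \<phi>" and s: "is_qrel Y Z \<psi>" and c: "is_qrel Z W \<chi>"
  shows "qcomp X Y W (qcomp Y Z W \<chi> \<psi>) \<phi> = qcomp X Z W \<chi> (qcomp X Y Z \<psi> \<phi>)"
proof (rule ext, rule ext)
  fix x w
  show "qcomp X Y W (qcomp Y Z W \<chi> \<psi>) \<phi> x w = qcomp X Z W \<chi> (qcomp X Y Z \<psi> \<phi>) x w"
  proof (cases "x \<in> carr X \<and> w \<in> carr W")
    case False thus ?thesis by (simp add: qcomp_out)
  next
    case True
    hence x: "x \<in> carr X" and w: "w \<in> carr W" by auto
    have "qcomp X Y W (qcomp Y Z W \<chi> \<psi>) \<phi> x w
        = (SUP y\<in>carr Y. qcomp Y Z W \<chi> \<psi> y w * lres (nrm Y y) (\<phi> x y))"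
      using qcomp_alt[OF p qcomp_qrel[OF s c] x w] .
    also have "\<dots> = (SUP y\<in>carr Y. SUP z\<in>carr Z. rres (\<chi> z w) (nrm Z z) * (\<psi> y z * lres (nrm Y y) (\<phi> x y)))"
      by (rule SUP_cong) (simp_all add: qcomp_in w SUP_mult_distr mult.assoc)
    also have "\<dots> = (SUP z\<in>carr Z. SUP y\<in>carr Y. rres (\<chi> z w) (nrm Z z) * (\<psi> y z * lres (nrm Y y) (\<phi> x y)))"
      by (rule SUP_commute)
    also have "\<dots> = (SUP z\<in>carr Z. rres (\<chi> z w) (nrm Z z) * qcomp X Y Z \<psi> \<phi> x z)"
      by (rule SUP_cong[OF refl]) (simp add: qcomp_alt[OF p s x] mult_SUP_distr)
    also have "\<dots> = qcomp X Z W \<chi> (qcomp X Y Z \<psi> \<phi>) x w"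
      by (rule qcomp_in[OF x w, symmetric])
    finally show ?thesis .
  qed
qed




lemma qlift_props:
  assumes p: "is_qrel X Y \<phi>"
  shows "is_qrel Y Z (qlift X Y Z \<xi> \<phi>) \<and> qrel_le X Z (qcomp X Y Z (qlift X Y Z \<xi> \<phi>) \<phi>) \<xi> \<and>
      (\<forall>\<psi>'. is_qrel Y Z \<psi>' \<and> qrel_le X Z (qcomp X Y Z \<psi>' \<phi>) \<xi> \<longrightarrow> qrel_le Y Z \<psi>' (qlift X Y Z \<xi> \<phi>))"
proof -
  define P where "P \<psi> \<longleftrightarrow> is_qrel Y Z \<psi> \<and> qrel_le X Z (qcomp X Y Z \<psi> \<phi>) \<xi> \<and>
      (\<forall>\<psi>'. is_qrel Y Z \<psi>' \<and> qrel_le X Z (qcomp X Y Z \<psi>' \<phi>) \<xi> \<longrightarrow> qrel_le Y Z \<psi>' \<psi>)" for \<psi>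
  define S where "S = {\<psi>. is_qrel Y Z \<psi> \<and> qrel_le X Z (qcomp X Y Z \<psi> \<phi>) \<xi>}"
  define L where "L y z = (if y \<in> carr Y \<and> z \<in> carr Z then SUP \<psi>\<in>S. \<psi> y z else bot)" for y z
  have Lq: "is_qrel Y Z L"
    unfolding is_qrel_def[of _ _ L] L_def by (auto simp: S_def intro!: DQ_SUP qrel_DQ)
  have "qrel_le X Z (qcomp X Y Z L \<phi>) \<xi>"
    unfolding qrel_le_def
  proof (intro ballI)
    fix x z assume x: "x \<in> carr X" and z: "z \<in> carr Z"
    have "qcomp X Y Z L \<phi> x z = (SUP y\<in>carr Y. L y z * lres (nrm Y y) (\<phi> x y))"
      by (rule qcomp_alt[OF p Lq x z])
    also have "\<dots> \<le> \<xi> x z"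
    proof (rule SUP_least)
      fix y assume y: "y \<in> carr Y"
      have "L y z * lres (nrm Y y) (\<phi> x y) = (SUP \<psi>\<in>S. \<psi> y z * lres (nrm Y y) (\<phi> x y))"
        using y z by (simp add: L_def SUP_mult_distr)
      also have "\<dots> \<le> \<xi> x z"
      proof (rule SUP_least)
        fix \<psi> assume "\<psi> \<in> S"
        hence q: "is_qrel Y Z \<psi>" and le: "qrel_le X Z (qcomp X Y Z \<psi> \<phi>) \<xi>" by (auto simp: S_def)
        have "\<psi> y z * lres (nrm Y y) (\<phi> x y) \<le> qcomp X Y Z \<psi> \<phi> x z"
          unfolding qcomp_alt[OF p q x z] using y by (rule SUP_upper2) simp
        also have "\<dots> \<le> \<xi> x z" using le x z by (rule qrel_leD)
        finally show "\<psi> y z * lres (nrm Y y) (\<phi> x y) \<le> \<xi> x z" .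
      qed
      finally show "L y z * lres (nrm Y y) (\<phi> x y) \<le> \<xi> x z" .
    qed
    finally show "qcomp X Y Z L \<phi> x z \<le> \<xi> x z" .
  qed
  moreover have "\<forall>\<psi>'. is_qrel Y Z \<psi>' \<and> qrel_le X Z (qcomp X Y Z \<psi>' \<phi>) \<xi> \<longrightarrow> qrel_le Y Z \<psi>' L"
    unfolding qrel_le_def[of Y Z] L_def S_def by (auto intro: SUP_upper)
  ultimately have "P L" using Lq unfolding P_def by blast
  moreover have "P a \<Longrightarrow> P b \<Longrightarrow> a = b" for a b
    unfolding P_def by (blast intro: qrel_eqI)
  ultimately have "P (THE \<psi>. P \<psi>)" by (metis theI)
  thus ?thesis unfolding P_def qlift_def .
qed

lemma qext_props:
  assumes p: "is_qrel Y Z \<psi>"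
  shows "is_qrel X Y (qext X Y Z \<psi> \<xi>) \<and> qrel_le X Z (qcomp X Y Z \<psi> (qext X Y Z \<psi> \<xi>)) \<xi> \<and>
      (\<forall>\<phi>'. is_qrel X Y \<phi>' \<and> qrel_le X Z (qcomp X Y Z \<psi> \<phi>') \<xi> \<longrightarrow> qrel_le X Y \<phi>' (qext X Y Z \<psi> \<xi>))"
proof -
  define P where "P \<phi> \<longleftrightarrow> is_qrel X Y \<phi> \<and> qrel_le X Z (qcomp X Y Z \<psi> \<phi>) \<xi> \<and>
      (\<forall>\<phi>'. is_qrel X Y \<phi>' \<and> qrel_le X Z (qcomp X Y Z \<psi> \<phi>') \<xi> \<longrightarrow> qrel_le X Y \<phi>' \<phi>)" for \<phi>
  define S where "S = {\<phi>. is_qrel X Y \<phi> \<and> qrel_le X Z (qcomp X Y Z \<psi> \<phi>) \<xi>}"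
  define L where "L x y = (if x \<in> carr X \<and> y \<in> carr Y then SUP \<phi>\<in>S. \<phi> x y else bot)" for x y
  have Lq: "is_qrel X Y L"
    unfolding is_qrel_def[of _ _ L] L_def by (auto simp: S_def intro!: DQ_SUP qrel_DQ)
  have "qrel_le X Z (qcomp X Y Z \<psi> L) \<xi>"
    unfolding qrel_le_def
  proof (intro ballI)
    fix x z assume x: "x \<in> carr X" and z: "z \<in> carr Z"
    have "qcomp X Y Z \<psi> L x z = (SUP y\<in>carr Y. rres (\<psi> y z) (nrm Y y) * L x y)"
      by (rule qcomp_in[OF x z])
    also have "\<dots> \<le> \<xi> x z"
    proof (rule SUP_least)
      fix y assume y: "y \<in> carr Y"
      have "rres (\<psi> y z) (nrm Y y) * L x y = (SUP \<phi>\<in>S. rres (\<psi> y z) (nrm Y y) * \<phi> x y)"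
        using y x by (simp add: L_def mult_SUP_distr)
      also have "\<dots> \<le> \<xi> x z"
      proof (rule SUP_least)
        fix \<phi> assume "\<phi> \<in> S"
        hence le: "qrel_le X Z (qcomp X Y Z \<psi> \<phi>) \<xi>" by (auto simp: S_def)
        have "rres (\<psi> y z) (nrm Y y) * \<phi> x y \<le> qcomp X Y Z \<psi> \<phi> x z"
          unfolding qcomp_in[OF x z] using y by (rule SUP_upper2) simp
        also have "\<dots> \<le> \<xi> x z" using le x z by (rule qrel_leD)
        finally show "rres (\<psi> y z) (nrm Y y) * \<phi> x y \<le> \<xi> x z" .
      qed
      finally show "rres (\<psi> y z) (nrm Y y) * L x y \<le> \<xi> x z" .
    qed
    finally show "qcomp X Y Z \<psi> L x z \<le> \<xi> x z" .
  qed
  moreover have "\<forall>\<phi>'. is_qrel X Y \<phi>' \<and> qrel_le X Z (qcomp X Y Z \<psi> \<phi>') \<xi> \<longrightarrow> qrel_le X Y \<phi>' L"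
    unfolding qrel_le_def[of X Y] L_def S_def by (auto intro: SUP_upper)
  ultimately have "P L" using Lq unfolding P_def by blast
  moreover have "P a \<Longrightarrow> P b \<Longrightarrow> a = b" for a b
    unfolding P_def by (blast intro: qrel_eqI)
  ultimately have "P (THE \<phi>. P \<phi>)" by (metis theI)
  thus ?thesis unfolding P_def qext_def .
qed




lemma carr_qone [simp]: "carr (qone q) = {()}" by (simp add: qone_def)
lemma nrm_qone [simp]: "nrm (qone q) u = q" by (simp add: qone_def)

lemma qrel_scal: "is_qrel (qone q) (qone q') (\<lambda>_ _. t) \<longleftrightarrow> t \<in> DQ q q'"
  unfolding is_qrel_def by simp

lemma PX_carr: "a \<in> carr (PX X) \<longleftrightarrow> is_qrel X (qone (fst a)) (snd a) \<and>
   qrel_le X (qone (fst a)) (qcomp X X (qone (fst a)) (snd a) (prel X)) (snd a)"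
  by (cases a) (simp add: PX_def Let_def)

lemma PX_nrm [simp]: "nrm (PX X) = fst" by (simp add: PX_def Let_def)

lemma PX_prel: "a \<in> carr (PX X) \<Longrightarrow> b \<in> carr (PX X) \<Longrightarrow>
  prel (PX X) a b = qlift X (qone (fst a)) (qone (fst b)) (snd b) (snd a) () ()"
  by (cases a, cases b) (simp add: PX_def Let_def)

lemma PdX_carr: "a \<in> carr (PdX X) \<longleftrightarrow> is_qrel (qone (fst a)) X (snd a) \<and>
   qrel_le (qone (fst a)) X (qcomp (qone (fst a)) X X (prel X) (snd a)) (snd a)"
  by (cases a) (simp add: PdX_def Let_def)

lemma PdX_nrm [simp]: "nrm (PdX X) = fst" by (simp add: PdX_def Let_def)

lemma PdX_prel: "a \<in> carr (PdX X) \<Longrightarrow> b \<in> carr (PdX X) \<Longrightarrow>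
  prel (PdX X) a b = qext (qone (fst a)) (qone (fst b)) X (snd b) (snd a) () ()"
  by (cases a, cases b) (simp add: PdX_def Let_def)

lemma qcomp_scalR: "x \<in> carr X \<Longrightarrow> qcomp X (qone q) (qone q') (\<lambda>_ _. t) \<mu> x u = rres t q * \<mu> x ()"
  by (simp add: qcomp_in)

lemma qcomp_scalL: "z \<in> carr Z \<Longrightarrow> qcomp (qone q) (qone q') Z l (\<lambda>_ _. t) u z = rres (l () z) q' * t"
  by (simp add: qcomp_in)

lemma PX_val: "a \<in> carr (PX X) \<Longrightarrow> x \<in> carr X \<Longrightarrow> snd a x () \<in> DQ (nrm X x) (fst a)"
  unfolding PX_carr using qrel_DQ by fastforce

lemma PX_out: "a \<in> carr (PX X) \<Longrightarrow> x \<notin> carr X \<Longrightarrow> snd a x u = bot"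
  unfolding PX_carr using qrel_out by fastforce

lemma PX_presh: "a \<in> carr (PX X) \<Longrightarrow> x \<in> carr X \<Longrightarrow> x' \<in> carr X \<Longrightarrow>
   rres (snd a x ()) (nrm X x) * prel X x' x \<le> snd a x' ()"
proof -
  assume a: "a \<in> carr (PX X)" and x: "x \<in> carr X" and x': "x' \<in> carr X"
  have "rres (snd a x ()) (nrm X x) * prel X x' x \<le> qcomp X X (qone (fst a)) (snd a) (prel X) x' ()"
    using x x' by (auto simp: qcomp_in intro: SUP_upper2)
  also have "\<dots> \<le> snd a x' ()" using a x' unfolding PX_carr by (auto dest: qrel_leD)
  finally show ?thesis .
qed

lemma PdX_val: "a \<in> carr (PdX X) \<Longrightarrow> x \<in> carr X \<Longrightarrow> snd a () x \<in> DQ (fst a) (nrm X x)"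
  unfolding PdX_carr using qrel_DQ by fastforce

lemma PdX_out: "a \<in> carr (PdX X) \<Longrightarrow> x \<notin> carr X \<Longrightarrow> snd a u x = bot"
  unfolding PdX_carr using qrel_out by fastforce

lemma PdX_copresh: "a \<in> carr (PdX X) \<Longrightarrow> x \<in> carr X \<Longrightarrow> x' \<in> carr X \<Longrightarrow>
   rres (prel X x x') (nrm X x) * snd a () x \<le> snd a () x'"
proof -
  assume a: "a \<in> carr (PdX X)" and x: "x \<in> carr X" and x': "x' \<in> carr X"
  have "rres (prel X x x') (nrm X x) * snd a () x \<le> qcomp (qone (fst a)) X X (prel X) (snd a) () x'"
    using x x' by (auto simp: qcomp_in intro: SUP_upper2)
  also have "\<dots> \<le> snd a () x'" using a x' unfolding PdX_carr by (auto dest: qrel_leD)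
  finally show ?thesis .
qed

lemma PX_hom:
  assumes a: "a \<in> carr (PX X)" and b: "b \<in> carr (PX X)" and t: "t \<in> DQ (fst a) (fst b)"
  shows "t \<le> prel (PX X) a b \<longleftrightarrow> (\<forall>x\<in>carr X. rres t (fst a) * snd a x () \<le> snd b x ())"
proof -
  let ?L = "qlift X (qone (fst a)) (qone (fst b)) (snd b) (snd a)"
  have qa: "is_qrel X (qone (fst a)) (snd a)" using a PX_carr by blast
  note P = qlift_props[OF qa, of "qone (fst b)" "snd b"]
  show ?thesis
  proof
    assume "t \<le> prel (PX X) a b"
    hence "qrel_le (qone (fst a)) (qone (fst b)) (\<lambda>_ _. t) ?L"
      using a b by (simp add: PX_prel qrel_le_def)
    hence "qrel_le X (qone (fst b)) (qcomp X (qone (fst a)) (qone (fst b)) (\<lambda>_ _. t) (snd a)) (snd b)"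
      using P qcomp_mono1 qrel_le_trans by blast
    thus "\<forall>x\<in>carr X. rres t (fst a) * snd a x () \<le> snd b x ()"
      by (auto simp: qrel_le_def qcomp_scalR)
  next
    assume H: "\<forall>x\<in>carr X. rres t (fst a) * snd a x () \<le> snd b x ()"
    have "qrel_le X (qone (fst b)) (qcomp X (qone (fst a)) (qone (fst b)) (\<lambda>_ _. t) (snd a)) (snd b)"
      using H by (auto simp: qrel_le_def qcomp_scalR)
    hence "qrel_le (qone (fst a)) (qone (fst b)) (\<lambda>_ _. t) ?L"
      using P t qrel_scal by blast
    thus "t \<le> prel (PX X) a b" using a b by (simp add: PX_prel qrel_le_def)
  qed
qed

lemma PdX_hom:
  assumes a: "a \<in> carr (PdX X)" and b: "b \<in> carr (PdX X)" and t: "t \<in> DQ (fst a) (fst b)"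
  shows "t \<le> prel (PdX X) a b \<longleftrightarrow> (\<forall>x\<in>carr X. rres (snd b () x) (fst b) * t \<le> snd a () x)"
proof -
  let ?L = "qext (qone (fst a)) (qone (fst b)) X (snd b) (snd a)"
  have qb: "is_qrel (qone (fst b)) X (snd b)" using b PdX_carr by blast
  note P = qext_props[OF qb, of "qone (fst a)" "snd a"]
  show ?thesis
  proof
    assume "t \<le> prel (PdX X) a b"
    hence "qrel_le (qone (fst a)) (qone (fst b)) (\<lambda>_ _. t) ?L"
      using a b by (simp add: PdX_prel qrel_le_def)
    hence "qrel_le (qone (fst a)) X (qcomp (qone (fst a)) (qone (fst b)) X (snd b) (\<lambda>_ _. t)) (snd a)"
      using P qcomp_mono2 qrel_le_trans by blast
    thus "\<forall>x\<in>carr X. rres (snd b () x) (fst b) * t \<le> snd a () x"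
      by (auto simp: qrel_le_def qcomp_scalL)
  next
    assume H: "\<forall>x\<in>carr X. rres (snd b () x) (fst b) * t \<le> snd a () x"
    have "qrel_le (qone (fst a)) X (qcomp (qone (fst a)) (qone (fst b)) X (snd b) (\<lambda>_ _. t)) (snd a)"
      using H by (auto simp: qrel_le_def qcomp_scalL)
    hence "qrel_le (qone (fst a)) (qone (fst b)) (\<lambda>_ _. t) ?L"
      using P t qrel_scal by blast
    thus "t \<le> prel (PdX X) a b" using a b by (simp add: PdX_prel qrel_le_def)
  qed
qed

lemma qpre_DQ: "is_qpre X \<Longrightarrow> x \<in> carr X \<Longrightarrow> x' \<in> carr X \<Longrightarrow> prel X x x' \<in> DQ (nrm X x) (nrm X x')"
  unfolding is_qpre_def by (blast intro: qrel_DQ)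

lemma qpre_out: "is_qpre X \<Longrightarrow> \<not> (x \<in> carr X \<and> x' \<in> carr X) \<Longrightarrow> prel X x x' = bot"
  unfolding is_qpre_def by (blast intro: qrel_out)

lemma qpre_refl: "is_qpre X \<Longrightarrow> x \<in> carr X \<Longrightarrow> nrm X x \<le> prel X x x"
  unfolding is_qpre_def qrel_le_def qid_def by force

lemma qpre_trans: "is_qpre X \<Longrightarrow> x \<in> carr X \<Longrightarrow> x' \<in> carr X \<Longrightarrow> x'' \<in> carr X \<Longrightarrow>
   rres (prel X x' x'') (nrm X x') * prel X x x' \<le> prel X x x''"
proof -
  assume X: "is_qpre X" and x: "x \<in> carr X" and x': "x' \<in> carr X" and x'': "x'' \<in> carr X"
  have "rres (prel X x' x'') (nrm X x') * prel X x x' \<le> qcomp X X X (prel X) (prel X) x x''"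
    using x x' x'' by (auto simp: qcomp_in intro: SUP_upper2)
  also have "\<dots> \<le> prel X x x''" using X x x'' unfolding is_qpre_def by (auto dest: qrel_leD)
  finally show ?thesis .
qed

lemma yo_PX: "is_qpre X \<Longrightarrow> x \<in> carr X \<Longrightarrow> (nrm X x, \<lambda>x' _. prel X x' x) \<in> carr (PX X)"
  unfolding PX_carr
proof (simp, intro conjI)
  assume X: "is_qpre X" and x: "x \<in> carr X"
  show "is_qrel X (qone (nrm X x)) (\<lambda>x' _. prel X x' x)"
    unfolding is_qrel_def using X x by (auto simp: qpre_DQ qpre_out)
  show "qrel_le X (qone (nrm X x)) (qcomp X X (qone (nrm X x)) (\<lambda>x' _. prel X x' x) (prel X)) (\<lambda>x' _. prel X x' x)"
    unfolding qrel_le_def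
  proof (intro ballI)
    fix x' u assume x': "x' \<in> carr X" and u: "u \<in> carr (qone (nrm X x))"
    have "qcomp X X (qone (nrm X x)) (\<lambda>x' _. prel X x' x) (prel X) x' u = qcomp X X X (prel X) (prel X) x' x"
      using x x' u by (simp add: qcomp_in)
    also have "\<dots> \<le> prel X x' x" using X x x' unfolding is_qpre_def by (auto dest: qrel_leD)
    finally show "qcomp X X (qone (nrm X x)) (\<lambda>x' _. prel X x' x) (prel X) x' u \<le> prel X x' x" .
  qed
qed

lemma co_PdX: "is_qpre X \<Longrightarrow> x \<in> carr X \<Longrightarrow> (nrm X x, \<lambda>_ x'. prel X x x') \<in> carr (PdX X)"
  unfolding PdX_carr
proof (simp, intro conjI)
  assume X: "is_qpre X" and x: "x \<in> carr X"
  show "is_qrel (qone (nrm X x)) X (\<lambda>_ x'. prel X x x')"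
    unfolding is_qrel_def using X x by (auto simp: qpre_DQ qpre_out)
  show "qrel_le (qone (nrm X x)) X (qcomp (qone (nrm X x)) X X (prel X) (\<lambda>_ x'. prel X x x')) (\<lambda>_ x'. prel X x x')"
    unfolding qrel_le_def
  proof (intro ballI)
    fix x' u assume x': "x' \<in> carr X" and u: "u \<in> carr (qone (nrm X x))"
    have "qcomp (qone (nrm X x)) X X (prel X) (\<lambda>_ x'. prel X x x') u x' = qcomp X X X (prel X) (prel X) x x'"
      using x x' u by (simp add: qcomp_in)
    also have "\<dots> \<le> prel X x x'" using X x x' unfolding is_qpre_def by (auto dest: qrel_leD)
    finally show "qcomp (qone (nrm X x)) X X (prel X) (\<lambda>_ x'. prel X x x') u x' \<le> prel X x x'" .
  qed
qed




lemma qgaloisD: "qgalois A B f g \<Longrightarrow> is_qmono A B f \<and> is_qmono B A g \<and>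
   (\<forall>a\<in>carr A. nrm A a \<le> prel A a (g (f a))) \<and> (\<forall>b\<in>carr B. nrm B b \<le> prel B (f (g b)) b)"
  unfolding qgalois_def qmap_le_def by simp

lemma qmonoD: "is_qmono A B f \<Longrightarrow> a \<in> carr A \<Longrightarrow> f a \<in> carr B \<and> nrm B (f a) = nrm A a"
  unfolding is_qmono_def by blast

lemma qmonoD2: "is_qmono A B f \<Longrightarrow> a \<in> carr A \<Longrightarrow> a' \<in> carr A \<Longrightarrow> prel A a a' \<le> prel B (f a) (f a')"
  unfolding is_qmono_def by blast

lemma mono_PX_PdX:
  assumes f: "is_qmono (PX X) (PdX Y) f" and a: "a \<in> carr (PX X)" and b: "b \<in> carr (PX X)"
    and t: "t \<in> DQ (fst a) (fst b)" and H: "\<forall>x\<in>carr X. rres t (fst a) * snd a x () \<le> snd b x ()"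
  shows "\<forall>y\<in>carr Y. rres (snd (f b) () y) (fst b) * t \<le> snd (f a) () y"
proof -
  have "t \<le> prel (PX X) a b" using PX_hom[OF a b t] H by blast
  also have "\<dots> \<le> prel (PdX Y) (f a) (f b)" using qmonoD2[OF f a b] .
  finally have 1: "t \<le> prel (PdX Y) (f a) (f b)" .
  have fa: "f a \<in> carr (PdX Y)" "fst (f a) = fst a" using qmonoD[OF f a] by auto
  have fb: "f b \<in> carr (PdX Y)" "fst (f b) = fst b" using qmonoD[OF f b] by auto
  show ?thesis using PdX_hom[OF fa(1) fb(1)] 1 t fa fb by simp
qed

lemma mono_PdX_PX:
  assumes f: "is_qmono (PdX X) (PX Y) f" and a: "a \<in> carr (PdX X)" and b: "b \<in> carr (PdX X)"
    and t: "t \<in> DQ (fst a) (fst b)" and H: "\<forall>x\<in>carr X. rres (snd b () x) (fst b) * t \<le> snd a () x"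
  shows "\<forall>y\<in>carr Y. rres t (fst a) * snd (f a) y () \<le> snd (f b) y ()"
proof -
  have "t \<le> prel (PdX X) a b" using PdX_hom[OF a b t] H by blast
  also have "\<dots> \<le> prel (PX Y) (f a) (f b)" using qmonoD2[OF f a b] .
  finally have 1: "t \<le> prel (PX Y) (f a) (f b)" .
  have fa: "f a \<in> carr (PX Y)" "fst (f a) = fst a" using qmonoD[OF f a] by auto
  have fb: "f b \<in> carr (PX Y)" "fst (f b) = fst b" using qmonoD[OF f b] by auto
  show ?thesis using PX_hom[OF fa(1) fb(1)] 1 t fa fb by simp
qed

lemma mono_PX_PX:
  assumes f: "is_qmono (PX X) (PX Y) f" and a: "a \<in> carr (PX X)" and b: "b \<in> carr (PX X)"
    and t: "t \<in> DQ (fst a) (fst b)" and H: "\<forall>x\<in>carr X. rres t (fst a) * snd a x () \<le> snd b x ()"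
  shows "\<forall>y\<in>carr Y. rres t (fst a) * snd (f a) y () \<le> snd (f b) y ()"
proof -
  have "t \<le> prel (PX X) a b" using PX_hom[OF a b t] H by blast
  also have "\<dots> \<le> prel (PX Y) (f a) (f b)" using qmonoD2[OF f a b] .
  finally have 1: "t \<le> prel (PX Y) (f a) (f b)" .
  have fa: "f a \<in> carr (PX Y)" "fst (f a) = fst a" using qmonoD[OF f a] by auto
  have fb: "f b \<in> carr (PX Y)" "fst (f b) = fst b" using qmonoD[OF f b] by auto
  show ?thesis using PX_hom[OF fa(1) fb(1)] 1 t fa fb by simp
qed

lemma mono_PdX_PdX:
  assumes f: "is_qmono (PdX X) (PdX Y) f" and a: "a \<in> carr (PdX X)" and b: "b \<in> carr (PdX X)"
    and t: "t \<in> DQ (fst a) (fst b)" and H: "\<forall>x\<in>carr X. rres (snd b () x) (fst b) * t \<le> snd a () x"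
  shows "\<forall>y\<in>carr Y. rres (snd (f b) () y) (fst b) * t \<le> snd (f a) () y"
proof -
  have "t \<le> prel (PdX X) a b" using PdX_hom[OF a b t] H by blast
  also have "\<dots> \<le> prel (PdX Y) (f a) (f b)" using qmonoD2[OF f a b] .
  finally have 1: "t \<le> prel (PdX Y) (f a) (f b)" .
  have fa: "f a \<in> carr (PdX Y)" "fst (f a) = fst a" using qmonoD[OF f a] by auto
  have fb: "f b \<in> carr (PdX Y)" "fst (f b) = fst b" using qmonoD[OF f b] by auto
  show ?thesis using PdX_hom[OF fa(1) fb(1)] 1 t fa fb by simp
qed

lemma PX_unit: "a \<in> carr (PX X) \<Longrightarrow> x \<in> carr X \<Longrightarrow> rres (fst a) (fst a) * snd a x () = snd a x ()"
  by (rule DQ_unit_l[OF PX_val])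

lemma PdX_unit: "a \<in> carr (PdX X) \<Longrightarrow> x \<in> carr X \<Longrightarrow> rres (snd a () x) (fst a) * fst a = snd a () x"
  by (rule DQ_rres[OF PdX_val])

lemma pw_PX_PdX:
  assumes f: "is_qmono (PX X) (PdX Y) f" and a: "a \<in> carr (PX X)" and b: "b \<in> carr (PX X)"
    and e: "fst a = fst b" and H: "\<forall>x\<in>carr X. snd a x () \<le> snd b x ()"
  shows "\<forall>y\<in>carr Y. snd (f b) () y \<le> snd (f a) () y"
proof -
  have h: "\<forall>x\<in>carr X. rres (fst a) (fst a) * snd a x () \<le> snd b x ()"
    using H PX_unit[OF a] by simp
  have t: "fst a \<in> DQ (fst a) (fst b)" using e by simp
  have 1: "\<forall>y\<in>carr Y. rres (snd (f b) () y) (fst b) * fst a \<le> snd (f a) () y"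
    by (rule mono_PX_PdX[OF f a b t h])
  have fb: "f b \<in> carr (PdX Y)" "fst (f b) = fst b" using qmonoD[OF f b] by auto
  show ?thesis
  proof
    fix y assume y: "y \<in> carr Y"
    have "rres (snd (f b) () y) (fst b) * fst a = snd (f b) () y"
      using PdX_unit[OF fb(1) y] fb(2) e by simp
    thus "snd (f b) () y \<le> snd (f a) () y" using 1 y by metis
  qed
qed

lemma pw_PdX_PX:
  assumes f: "is_qmono (PdX X) (PX Y) f" and a: "a \<in> carr (PdX X)" and b: "b \<in> carr (PdX X)"
    and e: "fst a = fst b" and H: "\<forall>x\<in>carr X. snd b () x \<le> snd a () x"
  shows "\<forall>y\<in>carr Y. snd (f a) y () \<le> snd (f b) y ()"
proof -
  have h: "\<forall>x\<in>carr X. rres (snd b () x) (fst b) * fst a \<le> snd a () x"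
  proof
    fix x assume x: "x \<in> carr X"
    have "rres (snd b () x) (fst b) * fst a = snd b () x" using PdX_unit[OF b x] e by simp
    thus "rres (snd b () x) (fst b) * fst a \<le> snd a () x" using H x by simp
  qed
  have t: "fst a \<in> DQ (fst a) (fst b)" using e by simp
  have 1: "\<forall>y\<in>carr Y. rres (fst a) (fst a) * snd (f a) y () \<le> snd (f b) y ()"
    by (rule mono_PdX_PX[OF f a b t h])
  have fa: "f a \<in> carr (PX Y)" "fst (f a) = fst a" using qmonoD[OF f a] by auto
  show ?thesis
  proof
    fix y assume y: "y \<in> carr Y"
    have "rres (fst a) (fst a) * snd (f a) y () = snd (f a) y ()"
      using PX_unit[OF fa(1) y] fa(2) by simp
    thus "snd (f a) y () \<le> snd (f b) y ()" using 1 y by metis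
  qed
qed

lemma pw_PX_PX:
  assumes f: "is_qmono (PX X) (PX Y) f" and a: "a \<in> carr (PX X)" and b: "b \<in> carr (PX X)"
    and e: "fst a = fst b" and H: "\<forall>x\<in>carr X. snd a x () \<le> snd b x ()"
  shows "\<forall>y\<in>carr Y. snd (f a) y () \<le> snd (f b) y ()"
proof -
  have h: "\<forall>x\<in>carr X. rres (fst a) (fst a) * snd a x () \<le> snd b x ()"
    using H PX_unit[OF a] by simp
  have t: "fst a \<in> DQ (fst a) (fst b)" using e by simp
  have 1: "\<forall>y\<in>carr Y. rres (fst a) (fst a) * snd (f a) y () \<le> snd (f b) y ()"
    by (rule mono_PX_PX[OF f a b t h])
  have fa: "f a \<in> carr (PX Y)" "fst (f a) = fst a" using qmonoD[OF f a] by auto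
  show ?thesis
  proof
    fix y assume y: "y \<in> carr Y"
    have "rres (fst a) (fst a) * snd (f a) y () = snd (f a) y ()"
      using PX_unit[OF fa(1) y] fa(2) by simp
    thus "snd (f a) y () \<le> snd (f b) y ()" using 1 y by metis
  qed
qed

lemma pw_PdX_PdX:
  assumes f: "is_qmono (PdX X) (PdX Y) f" and a: "a \<in> carr (PdX X)" and b: "b \<in> carr (PdX X)"
    and e: "fst a = fst b" and H: "\<forall>x\<in>carr X. snd b () x \<le> snd a () x"
  shows "\<forall>y\<in>carr Y. snd (f b) () y \<le> snd (f a) () y"
proof -
  have h: "\<forall>x\<in>carr X. rres (snd b () x) (fst b) * fst a \<le> snd a () x"
  proof
    fix x assume x: "x \<in> carr X"
    have "rres (snd b () x) (fst b) * fst a = snd b () x" using PdX_unit[OF b x] e by simp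
    thus "rres (snd b () x) (fst b) * fst a \<le> snd a () x" using H x by simp
  qed
  have t: "fst a \<in> DQ (fst a) (fst b)" using e by simp
  have 1: "\<forall>y\<in>carr Y. rres (snd (f b) () y) (fst b) * fst a \<le> snd (f a) () y"
    by (rule mono_PdX_PdX[OF f a b t h])
  have fb: "f b \<in> carr (PdX Y)" "fst (f b) = fst b" using qmonoD[OF f b] by auto
  show ?thesis
  proof
    fix y assume y: "y \<in> carr Y"
    have "rres (snd (f b) () y) (fst b) * fst a = snd (f b) () y"
      using PdX_unit[OF fb(1) y] fb(2) e by simp
    thus "snd (f b) () y \<le> snd (f a) () y" using 1 y by metis
  qed
qed

lemma PX_le_of:
  assumes a: "a \<in> carr (PX X)" and b: "b \<in> carr (PX X)" and e: "fst b = fst a"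
    and le: "fst a \<le> prel (PX X) a b"
  shows "\<forall>x\<in>carr X. snd a x () \<le> snd b x ()"
proof -
  have "\<forall>x\<in>carr X. rres (fst a) (fst a) * snd a x () \<le> snd b x ()"
    using PX_hom[OF a b] le e by simp
  thus ?thesis using PX_unit[OF a] by simp
qed

lemma PdX_le_of:
  assumes a: "a \<in> carr (PdX X)" and b: "b \<in> carr (PdX X)" and e: "fst b = fst a"
    and le: "fst a \<le> prel (PdX X) a b"
  shows "\<forall>x\<in>carr X. snd b () x \<le> snd a () x"
proof
  fix x assume x: "x \<in> carr X"
  have "rres (snd b () x) (fst b) * fst a \<le> snd a () x"
    using PdX_hom[OF a b] le e x by simp
  moreover have "rres (snd b () x) (fst b) * fst a = snd b () x"
    using PdX_unit[OF b x] e by simp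
  ultimately show "snd b () x \<le> snd a () x" by simp
qed




lemma part1:
  fixes X :: "('a, 'q::unital_quantale) qpre" and Y :: "('b, 'q) qpre"
  assumes X: "is_qpre X" and Y: "is_qpre Y" and G: "qgalois (PX X) (PdX Y) f g"
  shows "\<exists>\<phi>. is_qdist X Y \<phi> \<and> (\<forall>\<mu>\<in>carr (PX X). f \<mu> = d_up X Y \<phi> \<mu>) \<and>
              (\<forall>l\<in>carr (PdX Y). g l = d_down X Y \<phi> l)"
proof -
  have fm: "is_qmono (PX X) (PdX Y) f" and gm: "is_qmono (PdX Y) (PX X) g"
    and un: "\<forall>a\<in>carr (PX X). fst a \<le> prel (PX X) a (g (f a))"
    and cu: "\<forall>b\<in>carr (PdX Y). fst b \<le> prel (PdX Y) (f (g b)) b"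
    using qgaloisD[OF G] by auto
  have fC: "f a \<in> carr (PdX Y)" "fst (f a) = fst a" if "a \<in> carr (PX X)" for a
    using qmonoD[OF fm that] by auto
  have gC: "g b \<in> carr (PX X)" "fst (g b) = fst b" if "b \<in> carr (PdX Y)" for b
    using qmonoD[OF gm that] by auto
  have unpw: "snd a x () \<le> snd (g (f a)) x ()" if a: "a \<in> carr (PX X)" and x: "x \<in> carr X" for a x
    using PX_le_of[OF a gC(1)[OF fC(1)[OF a]]] gC(2)[OF fC(1)[OF a]] fC(2)[OF a] un a x by auto
  have cupw: "snd b () y \<le> snd (f (g b)) () y" if b: "b \<in> carr (PdX Y)" and y: "y \<in> carr Y" for b y
    using PdX_le_of[OF fC(1)[OF gC(1)[OF b]] b] gC(2)[OF b] fC(2)[OF gC(1)[OF b]] cu b y by auto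
  define yo where "yo x = (nrm X x, \<lambda>x' (_::unit). prel X x' x)" for x
  have yoC: "yo x \<in> carr (PX X)" if "x \<in> carr X" for x
    unfolding yo_def using yo_PX[OF X that] .
  have yo1: "fst (yo x) = nrm X x" for x by (simp add: yo_def)
  have yo2: "snd (yo x) x' u = prel X x' x" for x x' u by (simp add: yo_def)
  define \<phi> where "\<phi> x y = (if x \<in> carr X \<and> y \<in> carr Y then snd (f (yo x)) () y else bot)" for x y
  have \<phi>in: "\<phi> x y = snd (f (yo x)) () y" if "x \<in> carr X" "y \<in> carr Y" for x y
    using that by (simp add: \<phi>_def)
  have \<phi>q: "is_qrel X Y \<phi>"
    unfolding is_qrel_def
  proof (intro conjI ballI allI impI)
    fix x y assume x: "x \<in> carr X" and y: "y \<in> carr Y"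
    show "\<phi> x y \<in> DQ (nrm X x) (nrm Y y)"
      using PdX_val[OF fC(1)[OF yoC[OF x]] y] fC(2)[OF yoC[OF x]] yo1 \<phi>in[OF x y] by simp
  next
    fix x y assume "x \<notin> carr X \<or> y \<notin> carr Y" thus "\<phi> x y = bot" by (auto simp: \<phi>_def)
  qed
  have \<phi>L: "qrel_le X Y (qcomp X Y Y (prel Y) \<phi>) \<phi>"
    unfolding qrel_le_def
  proof (intro ballI)
    fix x y assume x: "x \<in> carr X" and y: "y \<in> carr Y"
    show "qcomp X Y Y (prel Y) \<phi> x y \<le> \<phi> x y"
      unfolding qcomp_in[OF x y]
    proof (rule SUP_least)
      fix y' assume y': "y' \<in> carr Y"
      show "rres (prel Y y' y) (nrm Y y') * \<phi> x y' \<le> \<phi> x y"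
        using PdX_copresh[OF fC(1)[OF yoC[OF x]] y' y] \<phi>in[OF x y] \<phi>in[OF x y'] by simp
    qed
  qed
  have \<phi>R: "qrel_le X Y (qcomp X X Y \<phi> (prel X)) \<phi>"
    unfolding qrel_le_def
  proof (intro ballI)
    fix x y assume x: "x \<in> carr X" and y: "y \<in> carr Y"
    show "qcomp X X Y \<phi> (prel X) x y \<le> \<phi> x y"
      unfolding qcomp_in[OF x y]
    proof (rule SUP_least)
      fix x' assume x': "x' \<in> carr X"
      have t: "prel X x x' \<in> DQ (fst (yo x)) (fst (yo x'))" using qpre_DQ[OF X x x'] yo1 by simp
      have h: "\<forall>x''\<in>carr X. rres (prel X x x') (fst (yo x)) * snd (yo x) x'' () \<le> snd (yo x') x'' ()"
        using qpre_trans[OF X _ x x'] yo1 yo2 by simp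
      have "\<forall>y\<in>carr Y. rres (snd (f (yo x')) () y) (fst (yo x')) * prel X x x' \<le> snd (f (yo x)) () y"
        by (rule mono_PX_PdX[OF fm yoC[OF x] yoC[OF x'] t h])
      thus "rres (\<phi> x' y) (nrm X x') * prel X x x' \<le> \<phi> x y"
        using y \<phi>in[OF x y] \<phi>in[OF x' y] yo1 by simp
    qed
  qed
  have dist: "is_qdist X Y \<phi>"
    unfolding is_qdist_def
    using \<phi>q qrel_le_trans[OF qcomp_mono2[OF \<phi>R] \<phi>L] by blast
  have partA: "f a = d_up X Y \<phi> a" if a: "a \<in> carr (PX X)" for a
  proof -
    obtain q \<mu> where aq: "a = (q, \<mu>)" by (cases a)
    let ?L = "qlift X (qone q) Y \<phi> \<mu>"
    have \<mu>q: "is_qrel X (qone q) \<mu>" using a aq PX_carr by fastforce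
    note LP = qlift_props[OF \<mu>q, of Y \<phi>]
    have Lcomp: "rres (?L () y) q * \<mu> x () \<le> \<phi> x y" if x: "x \<in> carr X" and y: "y \<in> carr Y" for x y
      using qrel_leD[OF conjunct1[OF conjunct2[OF LP]] x y] x y by (simp add: qcomp_in)
    have fa: "f a \<in> carr (PdX Y)" "fst (f a) = q" using fC[OF a] aq by auto
    have fq: "is_qrel (qone q) Y (snd (f a))" using fa PdX_carr by fastforce
    have A: "qrel_le (qone q) Y (snd (f a)) ?L"
    proof -
      have "qrel_le X Y (qcomp X (qone q) Y (snd (f a)) \<mu>) \<phi>"
        unfolding qrel_le_def
      proof (intro ballI)
        fix x y assume x: "x \<in> carr X" and y: "y \<in> carr Y"
        have t: "\<mu> x () \<in> DQ (fst (yo x)) (fst a)" using PX_val[OF a x] aq yo1 by simp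
        have h: "\<forall>x'\<in>carr X. rres (\<mu> x ()) (fst (yo x)) * snd (yo x) x' () \<le> snd a x' ()"
          using PX_presh[OF a x] aq yo1 yo2 by simp
        have "\<forall>y\<in>carr Y. rres (snd (f a) () y) (fst a) * \<mu> x () \<le> snd (f (yo x)) () y"
          by (rule mono_PX_PdX[OF fm yoC[OF x] a t h])
        thus "qcomp X (qone q) Y (snd (f a)) \<mu> x y \<le> \<phi> x y"
          using x y aq \<phi>in[OF x y] by (simp add: qcomp_in)
      qed
      thus ?thesis using LP fq by blast
    qed
    have B: "qrel_le (qone q) Y ?L (snd (f a))"
    proof -
      define b where "b = (q, ?L)"
      have Lq: "is_qrel (qone q) Y ?L" using LP by blast
      have "qrel_le X Y (qcomp X (qone q) Y (qcomp (qone q) Y Y (prel Y) ?L) \<mu>) \<phi>"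
      proof -
        have "qcomp X (qone q) Y (qcomp (qone q) Y Y (prel Y) ?L) \<mu> = qcomp X Y Y (prel Y) (qcomp X (qone q) Y ?L \<mu>)"
          by (rule qcomp_assoc[OF \<mu>q Lq]) (use Y is_qpre_def in blast)
        moreover have "qrel_le X Y (qcomp X Y Y (prel Y) (qcomp X (qone q) Y ?L \<mu>)) (qcomp X Y Y (prel Y) \<phi>)"
          using LP qcomp_mono2 by blast
        ultimately show ?thesis using \<phi>L qrel_le_trans by metis
      qed
      moreover have "is_qrel (qone q) Y (qcomp (qone q) Y Y (prel Y) ?L)"
        using qcomp_qrel[OF Lq] Y is_qpre_def by blast
      ultimately have "qrel_le (qone q) Y (qcomp (qone q) Y Y (prel Y) ?L) ?L" using LP by blast
      hence b: "b \<in> carr (PdX Y)" unfolding b_def PdX_carr using Lq by simp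
      have gb: "g b \<in> carr (PX X)" "fst (g b) = q" using gC[OF b] b_def by auto
      have mu_le: "\<forall>x\<in>carr X. snd a x () \<le> snd (g b) x ()"
      proof
        fix x assume x: "x \<in> carr X"
        have fy: "f (yo x) \<in> carr (PdX Y)" "fst (f (yo x)) = nrm X x" using fC[OF yoC[OF x]] yo1 by auto
        have t: "\<mu> x () \<in> DQ (fst (f (yo x))) (fst b)" using PX_val[OF a x] aq fy b_def by simp
        have h: "\<forall>y\<in>carr Y. rres (snd b () y) (fst b) * \<mu> x () \<le> snd (f (yo x)) () y"
          using Lcomp[OF x] \<phi>in[OF x] b_def by simp
        have "\<forall>x'\<in>carr X. rres (\<mu> x ()) (fst (f (yo x))) * snd (g (f (yo x))) x' () \<le> snd (g b) x' ()"
          by (rule mono_PdX_PX[OF gm fy(1) b t h])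
        hence 1: "rres (\<mu> x ()) (nrm X x) * snd (g (f (yo x))) x () \<le> snd (g b) x ()"
          using x fy by simp
        have "nrm X x \<le> snd (g (f (yo x))) x ()"
          using qpre_refl[OF X x] unpw[OF yoC[OF x] x] yo2 by (metis order_trans)
        hence "rres (\<mu> x ()) (nrm X x) * nrm X x \<le> rres (\<mu> x ()) (nrm X x) * snd (g (f (yo x))) x ()"
          by (rule qmult_mono_r)
        moreover have "rres (\<mu> x ()) (nrm X x) * nrm X x = \<mu> x ()"
          using DQ_rres[OF PX_val[OF a x]] aq by simp
        ultimately show "snd a x () \<le> snd (g b) x ()" using 1 aq by (metis order_trans snd_conv)
      qed
      have "\<forall>y\<in>carr Y. snd (f (g b)) () y \<le> snd (f a) () y"
        by (rule pw_PX_PdX[OF fm a gb(1)]) (use aq gb mu_le in auto)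
      thus ?thesis unfolding qrel_le_def
        using cupw[OF b] b_def by (auto intro: order_trans)
    qed
    have e: "snd (f a) = ?L" by (rule qrel_eqI[OF fq _ A B]) (use LP in blast)
    from e fa show ?thesis unfolding aq by (simp add: d_up_def prod_eq_iff)
  qed
  have partB: "g b = d_down X Y \<phi> b" if b: "b \<in> carr (PdX Y)" for b
  proof -
    obtain q l where bq: "b = (q, l)" by (cases b)
    let ?R = "qext X (qone q) Y l \<phi>"
    have lq: "is_qrel (qone q) Y l" using b bq PdX_carr by fastforce
    note RP = qext_props[OF lq, of X \<phi>]
    have Rq: "is_qrel X (qone q) ?R" using RP by blast
    have Rcomp: "rres (l () y) q * ?R x () \<le> \<phi> x y" if x: "x \<in> carr X" and y: "y \<in> carr Y" for x y
      using qrel_leD[OF conjunct1[OF conjunct2[OF RP]] x y] x y by (simp add: qcomp_in)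
    have gb: "g b \<in> carr (PX X)" "fst (g b) = q" using gC[OF b] bq by auto
    have gq: "is_qrel X (qone q) (snd (g b))" using gb PX_carr by fastforce
    have A: "qrel_le X (qone q) (snd (g b)) ?R"
    proof -
      have fgb: "f (g b) = (q, qlift X (qone q) Y \<phi> (snd (g b)))"
        using partA[OF gb(1)] gb by (cases "g b") (simp add: d_up_def)
      note LP = qlift_props[OF gq, of Y \<phi>]
      have "qrel_le X Y (qcomp X (qone q) Y l (snd (g b))) \<phi>"
        unfolding qrel_le_def
      proof (intro ballI)
        fix x y assume x: "x \<in> carr X" and y: "y \<in> carr Y"
        have "l () y \<le> qlift X (qone q) Y \<phi> (snd (g b)) () y"
          using cupw[OF b y] fgb bq by simp
        hence "rres (l () y) q * snd (g b) x () \<le> rres (qlift X (qone q) Y \<phi> (snd (g b)) () y) q * snd (g b) x ()"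
          by (intro qmult_mono_l rres_mono)
        also have "\<dots> \<le> \<phi> x y"
          using qrel_leD[OF conjunct1[OF conjunct2[OF LP]] x y] x y by (simp add: qcomp_in)
        finally show "qcomp X (qone q) Y l (snd (g b)) x y \<le> \<phi> x y" using x y by (simp add: qcomp_in)
      qed
      thus ?thesis using RP gq by blast
    qed
    have B: "qrel_le X (qone q) ?R (snd (g b))"
    proof -
      define a where "a = (q, ?R)"
      have "qrel_le X Y (qcomp X (qone q) Y l (qcomp X X (qone q) ?R (prel X))) \<phi>"
      proof -
        have "qcomp X X Y (qcomp X (qone q) Y l ?R) (prel X) = qcomp X (qone q) Y l (qcomp X X (qone q) ?R (prel X))"
          by (rule qcomp_assoc[OF _ Rq lq]) (use X is_qpre_def in blast)
        moreover have "qrel_le X Y (qcomp X X Y (qcomp X (qone q) Y l ?R) (prel X)) (qcomp X X Y \<phi> (prel X))"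
          using RP qcomp_mono1 by blast
        ultimately show ?thesis using \<phi>R qrel_le_trans by metis
      qed
      moreover have "is_qrel X (qone q) (qcomp X X (qone q) ?R (prel X))"
        using qcomp_qrel[OF _ Rq] X is_qpre_def by blast
      ultimately have "qrel_le X (qone q) (qcomp X X (qone q) ?R (prel X)) ?R" using RP by blast
      hence a: "a \<in> carr (PX X)" unfolding a_def PX_carr using Rq by simp
      have fa: "f a \<in> carr (PdX Y)" "fst (f a) = q" using fC[OF a] a_def by auto
      have fa2: "snd (f a) = qlift X (qone q) Y \<phi> ?R" using partA[OF a] a_def by (simp add: d_up_def)
      have "qrel_le (qone q) Y l (qlift X (qone q) Y \<phi> ?R)"
        using qlift_props[OF Rq, of Y \<phi>] lq RP by blast
      hence lle: "\<forall>y\<in>carr Y. snd b () y \<le> snd (f a) () y" using fa2 bq by (simp add: qrel_le_def)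
      have "\<forall>x\<in>carr X. snd (g (f a)) x () \<le> snd (g b) x ()"
        by (rule pw_PdX_PX[OF gm fa(1) b]) (use fa bq lle in auto)
      thus ?thesis unfolding qrel_le_def
        using unpw[OF a] a_def by (auto intro: order_trans)
    qed
    have e: "snd (g b) = ?R" by (rule qrel_eqI[OF gq Rq A B])
    from e gb show ?thesis unfolding bq by (simp add: d_down_def prod_eq_iff)
  qed
  show ?thesis using dist partA partB by blast
qed




lemma part2:
  fixes X :: "('a, 'q::unital_quantale) qpre" and Y :: "('b, 'q) qpre"
  assumes X: "is_qpre X" and Y: "is_qpre Y" and G: "qgalois (PX X) (PX Y) f g"
  shows "\<exists>\<phi>. is_qdist Y X \<phi> \<and> (\<forall>\<mu>\<in>carr (PX X). f \<mu> = d_star_up Y X \<phi> \<mu>) \<and>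
              (\<forall>\<mu>\<in>carr (PX Y). g \<mu> = d_star_low Y X \<phi> \<mu>)"
proof -
  have fm: "is_qmono (PX X) (PX Y) f" and gm: "is_qmono (PX Y) (PX X) g"
    and un: "\<forall>a\<in>carr (PX X). fst a \<le> prel (PX X) a (g (f a))"
    and cu: "\<forall>b\<in>carr (PX Y). fst b \<le> prel (PX Y) (f (g b)) b"
    using qgaloisD[OF G] by auto
  have fC: "f a \<in> carr (PX Y)" "fst (f a) = fst a" if "a \<in> carr (PX X)" for a
    using qmonoD[OF fm that] by auto
  have gC: "g b \<in> carr (PX X)" "fst (g b) = fst b" if "b \<in> carr (PX Y)" for b
    using qmonoD[OF gm that] by auto
  have unpw: "snd a x () \<le> snd (g (f a)) x ()" if a: "a \<in> carr (PX X)" and x: "x \<in> carr X" for a x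
    using PX_le_of[OF a gC(1)[OF fC(1)[OF a]]] gC(2)[OF fC(1)[OF a]] fC(2)[OF a] un a x by auto
  have cupw: "snd (f (g b)) y () \<le> snd b y ()" if b: "b \<in> carr (PX Y)" and y: "y \<in> carr Y" for b y
    using PX_le_of[OF fC(1)[OF gC(1)[OF b]] b] gC(2)[OF b] fC(2)[OF gC(1)[OF b]] cu b y by auto
  define yo where "yo x = (nrm X x, \<lambda>x' (_::unit). prel X x' x)" for x
  have yoC: "yo x \<in> carr (PX X)" if "x \<in> carr X" for x
    unfolding yo_def using yo_PX[OF X that] .
  have yo1: "fst (yo x) = nrm X x" for x by (simp add: yo_def)
  have yo2: "snd (yo x) x' u = prel X x' x" for x x' u by (simp add: yo_def)
  define \<phi> where "\<phi> y x = (if y \<in> carr Y \<and> x \<in> carr X then snd (f (yo x)) y () else bot)" for y x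
  have \<phi>in: "\<phi> y x = snd (f (yo x)) y ()" if "y \<in> carr Y" "x \<in> carr X" for x y
    using that by (simp add: \<phi>_def)
  have \<phi>q: "is_qrel Y X \<phi>"
    unfolding is_qrel_def
  proof (intro conjI ballI allI impI)
    fix y x assume y: "y \<in> carr Y" and x: "x \<in> carr X"
    show "\<phi> y x \<in> DQ (nrm Y y) (nrm X x)"
      using PX_val[OF fC(1)[OF yoC[OF x]] y] fC(2)[OF yoC[OF x]] yo1 \<phi>in[OF y x] by simp
  next
    fix y x assume "y \<notin> carr Y \<or> x \<notin> carr X" thus "\<phi> y x = bot" by (auto simp: \<phi>_def)
  qed
  have \<phi>R: "qrel_le Y X (qcomp Y Y X \<phi> (prel Y)) \<phi>"
    unfolding qrel_le_def
  proof (intro ballI)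
    fix y x assume y: "y \<in> carr Y" and x: "x \<in> carr X"
    show "qcomp Y Y X \<phi> (prel Y) y x \<le> \<phi> y x"
      unfolding qcomp_in[OF y x]
    proof (rule SUP_least)
      fix y' assume y': "y' \<in> carr Y"
      show "rres (\<phi> y' x) (nrm Y y') * prel Y y y' \<le> \<phi> y x"
        using PX_presh[OF fC(1)[OF yoC[OF x]] y' y] \<phi>in[OF y x] \<phi>in[OF y' x] by simp
    qed
  qed
  have \<phi>L: "qrel_le Y X (qcomp Y X X (prel X) \<phi>) \<phi>"
    unfolding qrel_le_def
  proof (intro ballI)
    fix y x assume y: "y \<in> carr Y" and x: "x \<in> carr X"
    show "qcomp Y X X (prel X) \<phi> y x \<le> \<phi> y x"
      unfolding qcomp_in[OF y x]
    proof (rule SUP_least)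
      fix x' assume x': "x' \<in> carr X"
      have t: "prel X x' x \<in> DQ (fst (yo x')) (fst (yo x))" using qpre_DQ[OF X x' x] yo1 by simp
      have h: "\<forall>x''\<in>carr X. rres (prel X x' x) (fst (yo x')) * snd (yo x') x'' () \<le> snd (yo x) x'' ()"
        using qpre_trans[OF X _ x' x] yo1 yo2 by simp
      have "\<forall>y\<in>carr Y. rres (prel X x' x) (fst (yo x')) * snd (f (yo x')) y () \<le> snd (f (yo x)) y ()"
        by (rule mono_PX_PX[OF fm yoC[OF x'] yoC[OF x] t h])
      thus "rres (prel X x' x) (nrm X x') * \<phi> y x' \<le> \<phi> y x"
        using y \<phi>in[OF y x] \<phi>in[OF y x'] yo1 by simp
    qed
  qed
  have dist: "is_qdist Y X \<phi>"
    unfolding is_qdist_def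
    using \<phi>q qrel_le_trans[OF qcomp_mono2[OF \<phi>R] \<phi>L] by blast
  have partA: "f a = d_star_up Y X \<phi> a" if a: "a \<in> carr (PX X)" for a
  proof -
    obtain q \<mu> where aq: "a = (q, \<mu>)" by (cases a)
    let ?C = "qcomp Y X (qone q) \<mu> \<phi>"
    have \<mu>q: "is_qrel X (qone q) \<mu>" using a aq PX_carr by fastforce
    have Cq: "is_qrel Y (qone q) ?C" by (rule qcomp_qrel[OF \<phi>q \<mu>q])
    have Cin: "?C y u = (SUP x\<in>carr X. rres (\<mu> x ()) (nrm X x) * \<phi> y x)" if y: "y \<in> carr Y" for y u
      using y by (simp add: qcomp_in)
    have fa: "f a \<in> carr (PX Y)" "fst (f a) = q" using fC[OF a] aq by auto
    have fq: "is_qrel Y (qone q) (snd (f a))" using fa PX_carr by fastforce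
    have A: "qrel_le Y (qone q) ?C (snd (f a))"
      unfolding qrel_le_def
    proof (intro ballI)
      fix y u assume y: "y \<in> carr Y" and u: "u \<in> carr (qone q)"
      show "?C y u \<le> snd (f a) y u"
        unfolding Cin[OF y]
      proof (rule SUP_least)
        fix x assume x: "x \<in> carr X"
        have t: "\<mu> x () \<in> DQ (fst (yo x)) (fst a)" using PX_val[OF a x] aq yo1 by simp
        have h: "\<forall>x'\<in>carr X. rres (\<mu> x ()) (fst (yo x)) * snd (yo x) x' () \<le> snd a x' ()"
          using PX_presh[OF a x] aq yo1 yo2 by simp
        have "\<forall>y\<in>carr Y. rres (\<mu> x ()) (fst (yo x)) * snd (f (yo x)) y () \<le> snd (f a) y ()"
          by (rule mono_PX_PX[OF fm yoC[OF x] a t h])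
        thus "rres (\<mu> x ()) (nrm X x) * \<phi> y x \<le> snd (f a) y u"
          using y \<phi>in[OF y x] yo1 by simp
      qed
    qed
    have B: "qrel_le Y (qone q) (snd (f a)) ?C"
    proof -
      define b where "b = (q, ?C)"
      have "qcomp Y Y (qone q) ?C (prel Y) = qcomp Y X (qone q) \<mu> (qcomp Y Y X \<phi> (prel Y))"
        by (rule qcomp_assoc[OF _ \<phi>q \<mu>q]) (use Y is_qpre_def in blast)
      hence "qrel_le Y (qone q) (qcomp Y Y (qone q) ?C (prel Y)) ?C"
        using qcomp_mono2[OF \<phi>R] by metis
      hence b: "b \<in> carr (PX Y)" unfolding b_def PX_carr using Cq by simp
      have gb: "g b \<in> carr (PX X)" "fst (g b) = q" using gC[OF b] b_def by auto
      have mu_le: "\<forall>x\<in>carr X. snd a x () \<le> snd (g b) x ()"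
      proof
        fix x assume x: "x \<in> carr X"
        have fy: "f (yo x) \<in> carr (PX Y)" "fst (f (yo x)) = nrm X x" using fC[OF yoC[OF x]] yo1 by auto
        have t: "\<mu> x () \<in> DQ (fst (f (yo x))) (fst b)" using PX_val[OF a x] aq fy b_def by simp
        have h: "\<forall>y\<in>carr Y. rres (\<mu> x ()) (fst (f (yo x))) * snd (f (yo x)) y () \<le> snd b y ()"
        proof
          fix y assume y: "y \<in> carr Y"
          show "rres (\<mu> x ()) (fst (f (yo x))) * snd (f (yo x)) y () \<le> snd b y ()"
            unfolding b_def snd_conv Cin[OF y] using x fy \<phi>in[OF y x]
            by (auto intro: SUP_upper2)
        qed
        have "\<forall>x'\<in>carr X. rres (\<mu> x ()) (fst (f (yo x))) * snd (g (f (yo x))) x' () \<le> snd (g b) x' ()"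
          by (rule mono_PX_PX[OF gm fy(1) b t h])
        hence 1: "rres (\<mu> x ()) (nrm X x) * snd (g (f (yo x))) x () \<le> snd (g b) x ()"
          using x fy by simp
        have "nrm X x \<le> snd (g (f (yo x))) x ()"
          using qpre_refl[OF X x] unpw[OF yoC[OF x] x] yo2 by (metis order_trans)
        hence "rres (\<mu> x ()) (nrm X x) * nrm X x \<le> rres (\<mu> x ()) (nrm X x) * snd (g (f (yo x))) x ()"
          by (rule qmult_mono_r)
        moreover have "rres (\<mu> x ()) (nrm X x) * nrm X x = \<mu> x ()"
          using DQ_rres[OF PX_val[OF a x]] aq by simp
        ultimately show "snd a x () \<le> snd (g b) x ()" using 1 aq by (metis order_trans snd_conv)
      qed
      have "\<forall>y\<in>carr Y. snd (f a) y () \<le> snd (f (g b)) y ()"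
        by (rule pw_PX_PX[OF fm a gb(1)]) (use aq gb mu_le in auto)
      thus ?thesis unfolding qrel_le_def
        using cupw[OF b] b_def by (auto intro: order_trans)
    qed
    have e: "snd (f a) = ?C" by (rule qrel_eqI[OF fq Cq B A])
    from e fa show ?thesis unfolding aq by (simp add: d_star_up_def prod_eq_iff)
  qed
  have partB: "g b = d_star_low Y X \<phi> b" if b: "b \<in> carr (PX Y)" for b
  proof -
    obtain q \<nu> where bq: "b = (q, \<nu>)" by (cases b)
    let ?L = "qlift Y X (qone q) \<nu> \<phi>"
    note LP = qlift_props[OF \<phi>q, of "qone q" \<nu>]
    have Lq: "is_qrel X (qone q) ?L" using LP by blast
    have gb: "g b \<in> carr (PX X)" "fst (g b) = q" using gC[OF b] bq by auto
    have gq: "is_qrel X (qone q) (snd (g b))" using gb PX_carr by fastforce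
    have A: "qrel_le X (qone q) (snd (g b)) ?L"
    proof -
      have fgb: "snd (f (g b)) = qcomp Y X (qone q) (snd (g b)) \<phi>"
        using partA[OF gb(1)] gb by (cases "g b") (simp add: d_star_up_def)
      have "qrel_le Y (qone q) (qcomp Y X (qone q) (snd (g b)) \<phi>) \<nu>"
        unfolding qrel_le_def using cupw[OF b] fgb bq by simp
      thus ?thesis using LP gq by blast
    qed
    have B: "qrel_le X (qone q) ?L (snd (g b))"
    proof -
      define a where "a = (q, ?L)"
      have "qcomp Y X (qone q) (qcomp X X (qone q) ?L (prel X)) \<phi> = qcomp Y X (qone q) ?L (qcomp Y X X (prel X) \<phi>)"
        by (rule qcomp_assoc[OF \<phi>q _ Lq]) (use X is_qpre_def in blast)
      moreover have "qrel_le Y (qone q) (qcomp Y X (qone q) ?L (qcomp Y X X (prel X) \<phi>)) (qcomp Y X (qone q) ?L \<phi>)"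
        by (rule qcomp_mono2[OF \<phi>L])
      ultimately have "qrel_le Y (qone q) (qcomp Y X (qone q) (qcomp X X (qone q) ?L (prel X)) \<phi>) \<nu>"
        using LP qrel_le_trans by metis
      moreover have "is_qrel X (qone q) (qcomp X X (qone q) ?L (prel X))"
        using qcomp_qrel[OF _ Lq] X is_qpre_def by blast
      ultimately have "qrel_le X (qone q) (qcomp X X (qone q) ?L (prel X)) ?L" using LP by blast
      hence a: "a \<in> carr (PX X)" unfolding a_def PX_carr using Lq by simp
      have fa: "f a \<in> carr (PX Y)" "fst (f a) = q" using fC[OF a] a_def by auto
      have fa2: "snd (f a) = qcomp Y X (qone q) ?L \<phi>" using partA[OF a] a_def by (simp add: d_star_up_def)
      have lle: "\<forall>y\<in>carr Y. snd (f a) y () \<le> snd b y ()"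
        using fa2 bq LP by (simp add: qrel_le_def)
      have "\<forall>x\<in>carr X. snd (g (f a)) x () \<le> snd (g b) x ()"
        by (rule pw_PX_PX[OF gm fa(1) b]) (use fa bq lle in auto)
      thus ?thesis unfolding qrel_le_def
        using unpw[OF a] a_def by (auto intro: order_trans)
    qed
    have e: "snd (g b) = ?L" by (rule qrel_eqI[OF gq Lq A B])
    from e gb show ?thesis unfolding bq by (simp add: d_star_low_def prod_eq_iff)
  qed
  show ?thesis using dist partA partB by blast
qed




lemma part3:
  fixes X :: "('a, 'q::unital_quantale) qpre" and Y :: "('b, 'q) qpre"
  assumes X: "is_qpre X" and Y: "is_qpre Y" and G: "qgalois (PdX X) (PdX Y) f g"
  shows "\<exists>\<phi>. is_qdist Y X \<phi> \<and> (\<forall>l\<in>carr (PdX X). f l = d_dag_low Y X \<phi> l) \<and>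
              (\<forall>l\<in>carr (PdX Y). g l = d_dag_up Y X \<phi> l)"
proof -
  have fm: "is_qmono (PdX X) (PdX Y) f" and gm: "is_qmono (PdX Y) (PdX X) g"
    and un: "\<forall>a\<in>carr (PdX X). fst a \<le> prel (PdX X) a (g (f a))"
    and cu: "\<forall>b\<in>carr (PdX Y). fst b \<le> prel (PdX Y) (f (g b)) b"
    using qgaloisD[OF G] by auto
  have fC: "f a \<in> carr (PdX Y)" "fst (f a) = fst a" if "a \<in> carr (PdX X)" for a
    using qmonoD[OF fm that] by auto
  have gC: "g b \<in> carr (PdX X)" "fst (g b) = fst b" if "b \<in> carr (PdX Y)" for b
    using qmonoD[OF gm that] by auto
  have unpw: "snd (g (f a)) () x \<le> snd a () x" if a: "a \<in> carr (PdX X)" and x: "x \<in> carr X" for a x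
    using PdX_le_of[OF a gC(1)[OF fC(1)[OF a]]] gC(2)[OF fC(1)[OF a]] fC(2)[OF a] un a x by auto
  have cupw: "snd b () y \<le> snd (f (g b)) () y" if b: "b \<in> carr (PdX Y)" and y: "y \<in> carr Y" for b y
    using PdX_le_of[OF fC(1)[OF gC(1)[OF b]] b] gC(2)[OF b] fC(2)[OF gC(1)[OF b]] cu b y by auto
  define co where "co y = (nrm Y y, \<lambda>(_::unit) y'. prel Y y y')" for y
  have coC: "co y \<in> carr (PdX Y)" if "y \<in> carr Y" for y
    unfolding co_def using co_PdX[OF Y that] .
  have co1: "fst (co y) = nrm Y y" for y by (simp add: co_def)
  have co2: "snd (co y) u y' = prel Y y y'" for y y' u by (simp add: co_def)
  define \<phi> where "\<phi> y x = (if y \<in> carr Y \<and> x \<in> carr X then snd (g (co y)) () x else bot)" for y x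
  have \<phi>in: "\<phi> y x = snd (g (co y)) () x" if "y \<in> carr Y" "x \<in> carr X" for x y
    using that by (simp add: \<phi>_def)
  have \<phi>q: "is_qrel Y X \<phi>"
    unfolding is_qrel_def
  proof (intro conjI ballI allI impI)
    fix y x assume y: "y \<in> carr Y" and x: "x \<in> carr X"
    show "\<phi> y x \<in> DQ (nrm Y y) (nrm X x)"
      using PdX_val[OF gC(1)[OF coC[OF y]] x] gC(2)[OF coC[OF y]] co1 \<phi>in[OF y x] by simp
  next
    fix y x assume "y \<notin> carr Y \<or> x \<notin> carr X" thus "\<phi> y x = bot" by (auto simp: \<phi>_def)
  qed
  have \<phi>L: "qrel_le Y X (qcomp Y X X (prel X) \<phi>) \<phi>"
    unfolding qrel_le_def
  proof (intro ballI)
    fix y x assume y: "y \<in> carr Y" and x: "x \<in> carr X"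
    show "qcomp Y X X (prel X) \<phi> y x \<le> \<phi> y x"
      unfolding qcomp_in[OF y x]
    proof (rule SUP_least)
      fix x' assume x': "x' \<in> carr X"
      show "rres (prel X x' x) (nrm X x') * \<phi> y x' \<le> \<phi> y x"
        using PdX_copresh[OF gC(1)[OF coC[OF y]] x' x] \<phi>in[OF y x] \<phi>in[OF y x'] by simp
    qed
  qed
  have \<phi>R: "qrel_le Y X (qcomp Y Y X \<phi> (prel Y)) \<phi>"
    unfolding qrel_le_def
  proof (intro ballI)
    fix y x assume y: "y \<in> carr Y" and x: "x \<in> carr X"
    show "qcomp Y Y X \<phi> (prel Y) y x \<le> \<phi> y x"
      unfolding qcomp_in[OF y x]
    proof (rule SUP_least)
      fix y' assume y': "y' \<in> carr Y"
      have t: "prel Y y y' \<in> DQ (fst (co y)) (fst (co y'))" using qpre_DQ[OF Y y y'] co1 by simp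
      have h: "\<forall>y''\<in>carr Y. rres (snd (co y') () y'') (fst (co y')) * prel Y y y' \<le> snd (co y) () y''"
        using qpre_trans[OF Y y y'] co1 co2 by simp
      have "\<forall>x\<in>carr X. rres (snd (g (co y')) () x) (fst (co y')) * prel Y y y' \<le> snd (g (co y)) () x"
        by (rule mono_PdX_PdX[OF gm coC[OF y] coC[OF y'] t h])
      thus "rres (\<phi> y' x) (nrm Y y') * prel Y y y' \<le> \<phi> y x"
        using x \<phi>in[OF y x] \<phi>in[OF y' x] co1 by simp
    qed
  qed
  have dist: "is_qdist Y X \<phi>"
    unfolding is_qdist_def
    using \<phi>q qrel_le_trans[OF qcomp_mono2[OF \<phi>R] \<phi>L] by blast
  have partB: "g b = d_dag_up Y X \<phi> b" if b: "b \<in> carr (PdX Y)" for b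
  proof -
    obtain q l where bq: "b = (q, l)" by (cases b)
    let ?C = "qcomp (qone q) Y X \<phi> l"
    have lq: "is_qrel (qone q) Y l" using b bq PdX_carr by fastforce
    have Cq: "is_qrel (qone q) X ?C" by (rule qcomp_qrel[OF lq \<phi>q])
    have Cin: "?C u x = (SUP y\<in>carr Y. rres (\<phi> y x) (nrm Y y) * l () y)" if x: "x \<in> carr X" for x u
      using x by (simp add: qcomp_in)
    have gb: "g b \<in> carr (PdX X)" "fst (g b) = q" using gC[OF b] bq by auto
    have gq: "is_qrel (qone q) X (snd (g b))" using gb PdX_carr by fastforce
    have A: "qrel_le (qone q) X ?C (snd (g b))"
      unfolding qrel_le_def
    proof (intro ballI)
      fix u x assume u: "u \<in> carr (qone q)" and x: "x \<in> carr X"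
      show "?C u x \<le> snd (g b) u x"
        unfolding Cin[OF x]
      proof (rule SUP_least)
        fix y assume y: "y \<in> carr Y"
        have t: "l () y \<in> DQ (fst b) (fst (co y))" using PdX_val[OF b y] bq co1 by simp
        have h: "\<forall>y'\<in>carr Y. rres (snd (co y) () y') (fst (co y)) * l () y \<le> snd b () y'"
          using PdX_copresh[OF b y] bq co1 co2 by simp
        have "\<forall>x\<in>carr X. rres (snd (g (co y)) () x) (fst (co y)) * l () y \<le> snd (g b) () x"
          by (rule mono_PdX_PdX[OF gm b coC[OF y] t h])
        thus "rres (\<phi> y x) (nrm Y y) * l () y \<le> snd (g b) u x"
          using x \<phi>in[OF y x] co1 by simp
      qed
    qed
    have B: "qrel_le (qone q) X (snd (g b)) ?C"
    proof -
      define a where "a = (q, ?C)"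
      have "qcomp (qone q) Y X (qcomp Y X X (prel X) \<phi>) l = qcomp (qone q) X X (prel X) ?C"
        by (rule qcomp_assoc[OF lq \<phi>q]) (use X is_qpre_def in blast)
      hence "qrel_le (qone q) X (qcomp (qone q) X X (prel X) ?C) ?C"
        using qcomp_mono1[OF \<phi>L] by metis
      hence a: "a \<in> carr (PdX X)" unfolding a_def PdX_carr using Cq by simp
      have fa: "f a \<in> carr (PdX Y)" "fst (f a) = q" using fC[OF a] a_def by auto
      have lle: "\<forall>y\<in>carr Y. snd b () y \<le> snd (f a) () y"
      proof
        fix y assume y: "y \<in> carr Y"
        have gy: "g (co y) \<in> carr (PdX X)" "fst (g (co y)) = nrm Y y" using gC[OF coC[OF y]] co1 by auto
        have lv: "l () y \<in> DQ q (nrm Y y)" using PdX_val[OF b y] bq by simp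
        have t: "l () y \<in> DQ (fst a) (fst (g (co y)))" using lv a_def gy by simp
        have h: "\<forall>x\<in>carr X. rres (snd (g (co y)) () x) (fst (g (co y))) * l () y \<le> snd a () x"
        proof
          fix x assume x: "x \<in> carr X"
          show "rres (snd (g (co y)) () x) (fst (g (co y))) * l () y \<le> snd a () x"
            unfolding a_def snd_conv Cin[OF x] using y gy \<phi>in[OF y x]
            by (auto intro: SUP_upper2)
        qed
        have "\<forall>y'\<in>carr Y. rres (snd (f (g (co y))) () y') (fst (g (co y))) * l () y \<le> snd (f a) () y'"
          by (rule mono_PdX_PdX[OF fm a gy(1) t h])
        hence 1: "rres (snd (f (g (co y))) () y) (nrm Y y) * l () y \<le> snd (f a) () y"
          using y gy by simp
        have "nrm Y y \<le> snd (f (g (co y))) () y"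
          using qpre_refl[OF Y y] cupw[OF coC[OF y] y] co2 by (metis order_trans)
        hence "rres (nrm Y y) (nrm Y y) * l () y \<le> rres (snd (f (g (co y))) () y) (nrm Y y) * l () y"
          by (intro qmult_mono_l rres_mono)
        moreover have "rres (nrm Y y) (nrm Y y) * l () y = l () y"
          by (rule DQ_unit_l[OF lv])
        ultimately show "snd b () y \<le> snd (f a) () y" using 1 bq by (metis order_trans snd_conv)
      qed
      have "\<forall>x\<in>carr X. snd (g b) () x \<le> snd (g (f a)) () x"
        by (rule pw_PdX_PdX[OF gm fa(1) b]) (use fa bq lle in auto)
      thus ?thesis unfolding qrel_le_def
        using unpw[OF a] a_def by (auto intro: order_trans)
    qed
    have e: "snd (g b) = ?C" by (rule qrel_eqI[OF gq Cq B A])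
    from e gb show ?thesis unfolding bq by (simp add: d_dag_up_def prod_eq_iff)
  qed
  have partA: "f a = d_dag_low Y X \<phi> a" if a: "a \<in> carr (PdX X)" for a
  proof -
    obtain q l where aq: "a = (q, l)" by (cases a)
    let ?R = "qext (qone q) Y X \<phi> l"
    note RP = qext_props[OF \<phi>q, of "qone q" l]
    have Rq: "is_qrel (qone q) Y ?R" using RP by blast
    have fa: "f a \<in> carr (PdX Y)" "fst (f a) = q" using fC[OF a] aq by auto
    have fq: "is_qrel (qone q) Y (snd (f a))" using fa PdX_carr by fastforce
    have A: "qrel_le (qone q) Y (snd (f a)) ?R"
    proof -
      have gfa: "snd (g (f a)) = qcomp (qone q) Y X \<phi> (snd (f a))"
        using partB[OF fa(1)] fa by (cases "f a") (simp add: d_dag_up_def)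
      have "qrel_le (qone q) X (qcomp (qone q) Y X \<phi> (snd (f a))) l"
        unfolding qrel_le_def using unpw[OF a] gfa aq by simp
      thus ?thesis using RP fq by blast
    qed
    have B: "qrel_le (qone q) Y ?R (snd (f a))"
    proof -
      define b where "b = (q, ?R)"
      have "qcomp (qone q) Y X (qcomp Y Y X \<phi> (prel Y)) ?R = qcomp (qone q) Y X \<phi> (qcomp (qone q) Y Y (prel Y) ?R)"
        by (rule qcomp_assoc[OF Rq _ \<phi>q]) (use Y is_qpre_def in blast)
      moreover have "qrel_le (qone q) X (qcomp (qone q) Y X (qcomp Y Y X \<phi> (prel Y)) ?R) (qcomp (qone q) Y X \<phi> ?R)"
        by (rule qcomp_mono1[OF \<phi>R])
      ultimately have "qrel_le (qone q) X (qcomp (qone q) Y X \<phi> (qcomp (qone q) Y Y (prel Y) ?R)) l"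
        using RP qrel_le_trans by metis
      moreover have "is_qrel (qone q) Y (qcomp (qone q) Y Y (prel Y) ?R)"
        using qcomp_qrel[OF Rq] Y is_qpre_def by blast
      ultimately have "qrel_le (qone q) Y (qcomp (qone q) Y Y (prel Y) ?R) ?R" using RP by blast
      hence b: "b \<in> carr (PdX Y)" unfolding b_def PdX_carr using Rq by simp
      have gb: "g b \<in> carr (PdX X)" "fst (g b) = q" using gC[OF b] b_def by auto
      have gb2: "snd (g b) = qcomp (qone q) Y X \<phi> ?R" using partB[OF b] b_def by (simp add: d_dag_up_def)
      have lle: "\<forall>x\<in>carr X. snd (g b) () x \<le> snd a () x"
        using gb2 aq RP by (simp add: qrel_le_def)
      have "\<forall>y\<in>carr Y. snd (f (g b)) () y \<le> snd (f a) () y"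
        by (rule pw_PdX_PdX[OF fm a gb(1)]) (use gb aq lle in auto)
      thus ?thesis unfolding qrel_le_def
        using cupw[OF b] b_def by (auto intro: order_trans)
    qed
    have e: "snd (f a) = ?R" by (rule qrel_eqI[OF fq Rq A B])
    from e fa show ?thesis unfolding aq by (simp add: d_dag_low_def prod_eq_iff)
  qed
  show ?thesis using dist partA partB by blast
qed


theorem proposition4p23:
  fixes X :: "('a, 'q::unital_quantale) qpre" and Y :: "('b, 'q) qpre"
  assumes "(bot::'q) < 1"
    and "is_qpre X" and "is_qpre Y"
  shows
    "(\<forall>f g. qgalois (PX X) (PdX Y) f g \<longrightarrow>
        (\<exists>\<phi>. is_qdist X Y \<phi> \<and> (\<forall>\<mu>\<in>carr (PX X). f \<mu> = d_up X Y \<phi> \<mu>) \<and>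
              (\<forall>l\<in>carr (PdX Y). g l = d_down X Y \<phi> l)))
   \<and> (\<forall>f g. qgalois (PX X) (PX Y) f g \<longrightarrow>
        (\<exists>\<phi>. is_qdist Y X \<phi> \<and> (\<forall>\<mu>\<in>carr (PX X). f \<mu> = d_star_up Y X \<phi> \<mu>) \<and>
              (\<forall>\<mu>\<in>carr (PX Y). g \<mu> = d_star_low Y X \<phi> \<mu>)))
   \<and> (\<forall>f g. qgalois (PdX X) (PdX Y) f g \<longrightarrow>
        (\<exists>\<phi>. is_qdist Y X \<phi> \<and> (\<forall>l\<in>carr (PdX X). f l = d_dag_low Y X \<phi> l) \<and>
              (\<forall>l\<in>carr (PdX Y). g l = d_dag_up Y X \<phi> l)))"
  using part1[OF assms(2,3)] part2[OF assms(2,3)] part3[OF assms(2,3)] by blast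

end
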